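(* In the setting below, for every $t\in[0,T]$ the marginal distribution $p^{\star}_t$ at time $t$ of the CTMC with the optimal generator $Q^{\star}$ started from $p_{\lim}$ satisfies $$p^{\star}_t(x)\propto \exp(V_t(x)/\alpha)\,p^{\mathrm{pre}}_t(x),\qquad x\in\mathcal{X},$$ where $p^{\mathrm{pre}}_t$ is the time-$t$ marginal of the CTMC with generator $Q^{\mathrm{pre}}$ started from $p_{\lim}$. In particular (at $t=T$) $p^{\star}_T\propto\exp(r/\alpha)p^{\mathrm{pre}}_T$.
   Context: Setting: $\mathcal{X}$ is a finite set, $T>0$, $\alpha>0$, $r:\mathcal{X}\to\mathbb{R}$, and $Q^{\mathrm{pre}}(t)$ is a pretrained time-dependent CTMC generator. A CTMC generator is a family $Q(t)=(Q_{x,y}(t))$ with $Q_{x,y}(t)\ge0$ for $x\neq y$ (rate from $x$ to $y$) and $Q_{x,x}(t)=-\sum_{y\neq x}Q_{x,y}(t)$; marginals obey $\frac{dp_t(x)}{dt}=\sum_{y\neq x}Q_{y,x}(t)p_t(y)-\sum_{y\neq x}Q_{x,y}(t)p_t(x)$. The initial distribution $p_{\lim}$ is a Dirac mass at a fixed state. $P^{Q}$ is the path law of the CTMC with generator $Q$ started at $p_{\lim}$. $Q^{\star}$ is a maximizer over all generators (fully nonparametric class) of $$J(Q)=\mathbb{E}_{P^{Q}}[r(x_T)]-\alpha\,\mathbb{E}_{P^{Q}}\Big[\int_0^T\sum_{y\neq x_t}\Big\{Q^{\mathrm{pre}}_{x_t,y}(t)-Q_{x_t,y}(t)+Q_{x_t,y}(t)\log\frac{Q_{x_t,y}(t)}{Q^{\mathrm{pre}}_{x_t,y}(t)}\Big\}dt\Big].$$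 The optimal value function is $$V_t(x)=\mathbb{E}_{x_{t:T}\sim P^{Q^{\star}}}\Big[r(x_T)-\alpha\int_t^T\sum_{y\neq x_s}\Big\{Q^{\star}_{x_s,y}(s)-Q^{\mathrm{pre}}_{x_s,y}(s)+Q^{\star}_{x_s,y}(s)\log\frac{Q^{\star}_{x_s,y}(s)}{Q^{\mathrm{pre}}_{x_s,y}(s)}\Big\}ds\;\Big|\;x_t=x\Big].$$ Generators are assumed regular enough (e.g. continuous in $t$) that the Kolmogorov equations have unique solutions; $0\log(0/0)=0$. *)

theory Defs
  imports "HOL-Analysis.Analysis"
begin

text \<open>Time-dependent CTMC generators on a finite state type 'x:
  Q t x y is the rate from x to y at time t (x \<noteq> y).\<close>

definition dirac :: "'x \<Rightarrow> 'x \<Rightarrow> real" where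
  "dirac x y = (if y = x then 1 else 0)"

definition fwd_sol ::
  "(real \<Rightarrow> 'x::finite \<Rightarrow> 'x \<Rightarrow> real) \<Rightarrow> real \<Rightarrow> real \<Rightarrow> (real \<Rightarrow> 'x \<Rightarrow> real) \<Rightarrow> bool" where
  "fwd_sol Q T s p \<longleftrightarrow>
     (\<forall>t\<in>{s..T}. \<forall>x. ((\<lambda>u. p u x) has_real_derivative
        (\<Sum>y\<in>UNIV - {x}. Q t y x * p t y - Q t x y * p t x)) (at t within {s..T}))"

definition is_generator :: "(real \<Rightarrow> 'x::finite \<Rightarrow> 'x \<Rightarrow> real) \<Rightarrow> real \<Rightarrow> bool" where
  "is_generator Q T \<longleftrightarrow>
     (\<forall>t\<in>{0..T}. \<forall>x y. x \<noteq> y \<longrightarrow> 0 \<le> Q t x y) \<and>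
     (\<forall>t\<in>{0..T}. \<forall>x. Q t x x = - (\<Sum>y\<in>UNIV - {x}. Q t x y)) \<and>
     (\<forall>x y. continuous_on {0..T} (\<lambda>t. Q t x y)) \<and>
     (\<forall>s\<in>{0..T}. \<forall>x. \<exists>p. fwd_sol Q T s p \<and> p s = dirac x) \<and>
     (\<forall>s\<in>{0..T}. \<forall>p q. fwd_sol Q T s p \<and> fwd_sol Q T s q \<and> p s = q s
        \<longrightarrow> (\<forall>t\<in>{s..T}. p t = q t))"

definition trans_prob ::
  "(real \<Rightarrow> 'x::finite \<Rightarrow> 'x \<Rightarrow> real) \<Rightarrow> real \<Rightarrow> real \<Rightarrow> 'x \<Rightarrow> real \<Rightarrow> 'x \<Rightarrow> real" where
  "trans_prob Q T s x t y = (THE v. \<exists>p. fwd_sol Q T s p \<and> p s = dirac x \<and> p t y = v)"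

definition marginal ::
  "(real \<Rightarrow> 'x::finite \<Rightarrow> 'x \<Rightarrow> real) \<Rightarrow> real \<Rightarrow> 'x \<Rightarrow> real \<Rightarrow> 'x \<Rightarrow> real" where
  "marginal Q T x0 t y = trans_prob Q T 0 x0 t y"

text \<open>KL rate of Q relative to Qpre at state x (convention 0 log(0/0) = 0 is automatic).\<close>
definition kl_rate ::
  "(real \<Rightarrow> 'x::finite \<Rightarrow> 'x \<Rightarrow> real) \<Rightarrow> (real \<Rightarrow> 'x \<Rightarrow> 'x \<Rightarrow> real) \<Rightarrow> real \<Rightarrow> 'x \<Rightarrow> real" where
  "kl_rate Qpre Q t x =
     (\<Sum>y\<in>UNIV - {x}. Qpre t x y - Q t x y + Q t x y * ln (Q t x y / Qpre t x y))"

definition abs_cont ::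
  "(real \<Rightarrow> 'x \<Rightarrow> 'x \<Rightarrow> real) \<Rightarrow> (real \<Rightarrow> 'x \<Rightarrow> 'x \<Rightarrow> real) \<Rightarrow> real \<Rightarrow> bool" where
  "abs_cont Qpre Q T \<longleftrightarrow> (\<forall>t\<in>{0..T}. \<forall>x y. x \<noteq> y \<longrightarrow> Qpre t x y = 0 \<longrightarrow> Q t x y = 0)"

text \<open>Generators with finite objective (the others have J = -infinity).\<close>
definition admissible ::
  "(real \<Rightarrow> 'x::finite \<Rightarrow> 'x \<Rightarrow> real) \<Rightarrow> real \<Rightarrow> 'x \<Rightarrow> (real \<Rightarrow> 'x \<Rightarrow> 'x \<Rightarrow> real) \<Rightarrow> bool" where
  "admissible Qpre T x0 Q \<longleftrightarrow>
     is_generator Q T \<and> abs_cont Qpre Q T \<and>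
     set_integrable lborel {0..T} (\<lambda>t. \<Sum>x\<in>UNIV. marginal Q T x0 t x * kl_rate Qpre Q t x)"

text \<open>J(Q) = E[r(x_T)] - alpha * E[int_0^T KL-rate(t, x_t) dt], written via marginals (Fubini).\<close>
definition objective ::
  "('x::finite \<Rightarrow> real) \<Rightarrow> real \<Rightarrow> (real \<Rightarrow> 'x \<Rightarrow> 'x \<Rightarrow> real) \<Rightarrow> real \<Rightarrow> 'x
     \<Rightarrow> (real \<Rightarrow> 'x \<Rightarrow> 'x \<Rightarrow> real) \<Rightarrow> real" where
  "objective r \<alpha> Qpre T x0 Q =
     (\<Sum>x\<in>UNIV. marginal Q T x0 T x * r x)
     - \<alpha> * (LINT t:{0..T}|lborel. (\<Sum>x\<in>UNIV. marginal Q T x0 t x * kl_rate Qpre Q t x))"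

definition value_fn ::
  "('x::finite \<Rightarrow> real) \<Rightarrow> real \<Rightarrow> (real \<Rightarrow> 'x \<Rightarrow> 'x \<Rightarrow> real) \<Rightarrow> (real \<Rightarrow> 'x \<Rightarrow> 'x \<Rightarrow> real)
     \<Rightarrow> real \<Rightarrow> real \<Rightarrow> 'x \<Rightarrow> real" where
  "value_fn r \<alpha> Qpre Q T t x =
     (\<Sum>y\<in>UNIV. trans_prob Q T t x T y * r y)
     - \<alpha> * (LINT s:{t..T}|lborel. (\<Sum>y\<in>UNIV. trans_prob Q T t x s y * kl_rate Qpre Q s y))"

end

theory Submission
  imports Defs
begin

lemma offdiag_swap:
  fixes f :: "'x::finite \<Rightarrow> 'x \<Rightarrow> real"
  shows "(\<Sum>y\<in>UNIV. \<Sum>z\<in>UNIV-{y}. f z y) = (\<Sum>y\<in>UNIV. \<Sum>z\<in>UNIV-{y}. f y z)"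
proof -
  have "(\<Sum>y\<in>UNIV. \<Sum>z\<in>UNIV-{y}. f z y) = (\<Sum>y\<in>UNIV. (\<Sum>z\<in>UNIV. f z y) - f y y)"
    by (simp add: sum_diff1)
  also have "\<dots> = (\<Sum>y\<in>UNIV. \<Sum>z\<in>UNIV. f z y) - (\<Sum>y\<in>UNIV. f y y)"
    by (simp add: sum_subtractf)
  also have "\<dots> = (\<Sum>y\<in>UNIV. \<Sum>z\<in>UNIV. f y z) - (\<Sum>y\<in>UNIV. f y y)"
    by (subst sum.swap) simp
  also have "\<dots> = (\<Sum>y\<in>UNIV. \<Sum>z\<in>UNIV-{y}. f y z)"
    by (simp add: sum_diff1 sum_subtractf)
  finally show ?thesis .
qed

lemma deriv_pos_left:
  fixes f :: "real \<Rightarrow> real"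
  assumes "(f has_real_derivative D) (at \<tau> within {s..T})" "D > 0" "s < \<tau>" "\<tau> \<le> T"
  shows "\<exists>u. s \<le> u \<and> u < \<tau> \<and> f u < f \<tau>"
proof -
  have "((\<lambda>y. (f y - f \<tau>) / (y - \<tau>)) \<longlongrightarrow> D) (at \<tau> within {s..T})"
    using assms(1) by (simp add: has_field_derivative_iff)
  then have "eventually (\<lambda>y. 0 < (f y - f \<tau>) / (y - \<tau>)) (at \<tau> within {s..T})"
    using assms(2) by (rule order_tendstoD)
  then obtain d where d: "d > 0" "\<And>y. y \<in> {s..T} \<Longrightarrow> y \<noteq> \<tau> \<Longrightarrow> dist y \<tau> < d \<Longrightarrow> 0 < (f y - f \<tau>) / (y - \<tau>)"
    unfolding eventually_at by blast
  define u where "u = max s (\<tau> - d/2)"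
  have u: "u \<in> {s..T}" "u \<noteq> \<tau>" "dist u \<tau> < d" "u < \<tau>"
    using assms d by (auto simp: u_def dist_real_def)
  have "0 < (f u - f \<tau>) / (u - \<tau>)" using d(2)[OF u(1-3)] .
  then have "f u - f \<tau> < 0" using u(4) by (simp add: zero_less_divide_iff)
  then show ?thesis using u by auto
qed

lemma left_limit_nonneg:
  fixes f :: "real \<Rightarrow> real"
  assumes "continuous_on {s..T} f" "s < \<tau>" "\<tau> \<le> T" "\<And>u. s \<le> u \<Longrightarrow> u < \<tau> \<Longrightarrow> f u > 0"
  shows "f \<tau> \<ge> 0"
proof (rule ccontr)
  assume "\<not> f \<tau> \<ge> 0"
  then have neg: "f \<tau> < 0" by simp
  have "\<tau> \<in> {s..T}" using assms by auto
  then obtain d where d: "d > 0" "\<And>x'. x' \<in> {s..T} \<Longrightarrow> dist x' \<tau> < d \<Longrightarrow> dist (f x') (f \<tau>) < - f \<tau>"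
    using assms(1) neg unfolding continuous_on_iff by (metis neg_0_less_iff_less)
  define u where "u = max s (\<tau> - d/2)"
  have u: "u \<in> {s..T}" "dist u \<tau> < d" "u < \<tau>" "s \<le> u"
    using assms d by (auto simp: u_def dist_real_def)
  have "dist (f u) (f \<tau>) < - f \<tau>" using d(2)[OF u(1,2)] .
  moreover have "f u > 0" using assms(4)[OF u(4,3)] .
  ultimately show False using neg by (auto simp: dist_real_def)
qed

lemma sum_dirac1: "(\<Sum>w\<in>UNIV. c w * dirac (x::'x::finite) w) = (c x :: real)"
proof -
  have "(\<Sum>w\<in>UNIV. c w * dirac x w) = (\<Sum>w\<in>UNIV. if w = x then c w else 0)"
    by (intro sum.cong) (auto simp: dirac_def)
  then show ?thesis by simp
qed

lemma sum_dirac2: "(\<Sum>w\<in>UNIV. dirac (x::'x::finite) w * c w) = (c x :: real)"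
  using sum_dirac1[of c x] by (simp add: mult.commute)

lemma sum_dirac0: "(\<Sum>w\<in>UNIV. dirac (x::'x::finite) w) = (1::real)"
  using sum_dirac1[of "\<lambda>_. 1" x] by simp

lemma deriv_from_bound:
  fixes g :: "real \<Rightarrow> real"
  assumes "\<And>e. e > 0 \<Longrightarrow> \<exists>d>0. \<forall>t\<in>S. t \<noteq> t0 \<and> \<bar>t - t0\<bar> < d \<longrightarrow> \<bar>(g t - g t0) / (t - t0) - D\<bar> \<le> e"
  shows "(g has_real_derivative D) (at t0 within S)"
  unfolding has_field_derivative_iff Lim_within
proof (intro allI impI)
  fix e :: real assume e: "e > 0"
  obtain d where d: "d > 0" "\<forall>t\<in>S. t \<noteq> t0 \<and> \<bar>t - t0\<bar> < d \<longrightarrow> \<bar>(g t - g t0) / (t - t0) - D\<bar> \<le> e/2"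
    using assms[of "e/2"] e by auto
  show "\<exists>d>0. \<forall>x\<in>S. 0 < dist x t0 \<and> dist x t0 < d \<longrightarrow> dist ((g x - g t0) / (x - t0)) D < e"
    using d e by (intro exI[of _ d]) (auto simp: dist_real_def)
qed

locale gen =
  fixes Q :: "real \<Rightarrow> 'x::finite \<Rightarrow> 'x \<Rightarrow> real" and T :: real
  assumes G: "is_generator Q T"
begin

lemma G1: "(\<forall>t\<in>{0..T}. \<forall>x y. x \<noteq> y \<longrightarrow> 0 \<le> Q t x y)"
  using G unfolding is_generator_def by (elim conjE) assumption

lemma G2: "(\<forall>t\<in>{0..T}. \<forall>x. Q t x x = - (\<Sum>y\<in>UNIV - {x}. Q t x y))"
  using G unfolding is_generator_def by (elim conjE) assumption

lemma G3: "(\<forall>x y. continuous_on {0..T} (\<lambda>t. Q t x y))"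
  using G unfolding is_generator_def by (elim conjE) assumption

lemma G4: "(\<forall>s\<in>{0..T}. \<forall>x. \<exists>p. fwd_sol Q T s p \<and> p s = dirac x)"
  using G unfolding is_generator_def by (elim conjE) assumption

lemma G5: "(\<forall>s\<in>{0..T}. \<forall>p q. fwd_sol Q T s p \<and> fwd_sol Q T s q \<and> p s = q s
        \<longrightarrow> (\<forall>t\<in>{s..T}. p t = q t))"
  using G unfolding is_generator_def by (elim conjE) assumption

lemma Qnn: "t \<in> {0..T} \<Longrightarrow> x \<noteq> y \<Longrightarrow> 0 \<le> Q t x y"
  using G1 by simp

lemma Qdiag: "t \<in> {0..T} \<Longrightarrow> Q t x x = - (\<Sum>y\<in>UNIV - {x}. Q t x y)"
  using G2 by simp

lemma Qcont: "continuous_on {0..T} (\<lambda>t. Q t x y)"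
  using G3 by simp

lemma Qex: "s \<in> {0..T} \<Longrightarrow> \<exists>p. fwd_sol Q T s p \<and> p s = dirac x"
  using G4 by simp

lemma Quniq: "s \<in> {0..T} \<Longrightarrow> fwd_sol Q T s p \<Longrightarrow> fwd_sol Q T s q \<Longrightarrow> p s = q s
   \<Longrightarrow> t \<in> {s..T} \<Longrightarrow> p t = q t"
  using G5 by blast

lemma fwd_cong:
  assumes "fwd_sol Q T s p" "\<And>t. t \<in> {s..T} \<Longrightarrow> q t = p t"
  shows "fwd_sol Q T s q"
  unfolding fwd_sol_def
proof (intro ballI allI)
  fix t x assume t: "t \<in> {s..T}"
  have "((\<lambda>u. p u x) has_real_derivative
        (\<Sum>y\<in>UNIV - {x}. Q t y x * p t y - Q t x y * p t x)) (at t within {s..T})"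
    using assms(1) t unfolding fwd_sol_def by blast
  moreover have "q t = p t" using assms(2) t by auto
  ultimately have "((\<lambda>u. p u x) has_real_derivative
        (\<Sum>y\<in>UNIV - {x}. Q t y x * q t y - Q t x y * q t x)) (at t within {s..T})"
    by simp
  then show "((\<lambda>u. q u x) has_real_derivative
        (\<Sum>y\<in>UNIV - {x}. Q t y x * q t y - Q t x y * q t x)) (at t within {s..T})"
    apply (rule has_field_derivative_transform_within[where d=1])
    using assms(2) t by (auto simp: dist_real_def)
qed

lemma fwd_restrict:
  assumes "fwd_sol Q T s p" "s \<le> s'"
  shows "fwd_sol Q T s' p"
  unfolding fwd_sol_def
proof (intro ballI allI)
  fix t x assume t: "t \<in> {s'..T}"
  have "((\<lambda>u. p u x) has_real_derivative
        (\<Sum>y\<in>UNIV - {x}. Q t y x * p t y - Q t x y * p t x)) (at t within {s..T})"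
    using assms t unfolding fwd_sol_def by auto
  then show "((\<lambda>u. p u x) has_real_derivative
        (\<Sum>y\<in>UNIV - {x}. Q t y x * p t y - Q t x y * p t x)) (at t within {s'..T})"
    by (rule has_field_derivative_subset) (use assms in auto)
qed

lemma fwd_lin:
  fixes I :: "'i set" and c :: "'i \<Rightarrow> real"
  assumes "finite I" "\<And>i. i \<in> I \<Longrightarrow> fwd_sol Q T s (P i)"
  shows "fwd_sol Q T s (\<lambda>t y. \<Sum>i\<in>I. c i * P i t y)"
  unfolding fwd_sol_def
proof (intro ballI allI)
  fix t x assume t: "t \<in> {s..T}"
  have "((\<lambda>u. \<Sum>i\<in>I. c i * P i u x) has_real_derivative
        (\<Sum>i\<in>I. c i * (\<Sum>y\<in>UNIV - {x}. Q t y x * P i t y - Q t x y * P i t x))) (at t within {s..T})"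
    apply (intro DERIV_sum DERIV_cmult)
    using assms t unfolding fwd_sol_def by blast
  also have "(\<Sum>i\<in>I. c i * (\<Sum>y\<in>UNIV - {x}. Q t y x * P i t y - Q t x y * P i t x))
     = (\<Sum>y\<in>UNIV - {x}. Q t y x * (\<Sum>i\<in>I. c i * P i t y) - Q t x y * (\<Sum>i\<in>I. c i * P i t x))"
    apply (simp only: sum_distrib_left)
    apply (subst sum.swap)
    apply (rule sum.cong[OF refl])
    apply (simp add: sum_subtractf right_diff_distrib sum_distrib_left mult.left_commute)
    done
  finally show "((\<lambda>u. \<Sum>i\<in>I. c i * P i u x) has_real_derivative
        (\<Sum>y\<in>UNIV - {x}. Q t y x * (\<Sum>i\<in>I. c i * P i t y) - Q t x y * (\<Sum>i\<in>I. c i * P i t x))) (at t within {s..T})" .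
qed

lemma fwd_deriv:
  assumes "fwd_sol Q T s p" "t \<in> {s..T}"
  shows "((\<lambda>u. p u x) has_real_derivative
        (\<Sum>y\<in>UNIV - {x}. Q t y x * p t y - Q t x y * p t x)) (at t within {s..T})"
  using assms unfolding fwd_sol_def by blast

lemma fwd_cont:
  assumes "fwd_sol Q T s p"
  shows "continuous_on {s..T} (\<lambda>t. p t x)"
  by (rule DERIV_continuous_on[OF fwd_deriv[OF assms]])

lemma Qbound: "\<exists>B>0. \<forall>t\<in>{0..T}. \<forall>x y. \<bar>Q t x y\<bar> \<le> B"
proof -
  let ?F = "\<lambda>t. \<Sum>x\<in>UNIV. \<Sum>y\<in>UNIV. \<bar>Q t x y\<bar>"
  have "continuous_on {0..T} ?F"
    by (intro continuous_intros Qcont)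
  then have "bounded (?F ` {0..T})"
    by (intro compact_imp_bounded compact_continuous_image compact_Icc)
  then obtain b where b: "b > 0" "\<And>t. t \<in> {0..T} \<Longrightarrow> norm (?F t) \<le> b"
    unfolding bounded_pos by blast
  have "\<bar>Q t x y\<bar> \<le> b" if "t \<in> {0..T}" for t x y
  proof -
    have "\<bar>Q t x y\<bar> \<le> (\<Sum>y\<in>UNIV. \<bar>Q t x y\<bar>)"
      by (rule member_le_sum) auto
    also have "\<dots> \<le> ?F t"
      by (rule member_le_sum[where f="\<lambda>x. \<Sum>y\<in>UNIV. \<bar>Q t x y\<bar>"]) (auto intro: sum_nonneg)
    also have "\<dots> \<le> b" using b(2)[OF that] by simp
    finally show ?thesis .
  qed
  then show ?thesis using b(1) by blast
qed

lemma fwd_sum: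
  assumes "fwd_sol Q T s p" "t \<in> {s..T}"
  shows "(\<Sum>y\<in>UNIV. p t y) = (\<Sum>y\<in>UNIV. p s y)"
proof -
  have "((\<lambda>u. \<Sum>y\<in>UNIV. p u y) has_real_derivative 0) (at u within {s..T})" if u: "u \<in> {s..T}" for u
  proof -
    have "((\<lambda>u. \<Sum>y\<in>UNIV. p u y) has_real_derivative
       (\<Sum>y\<in>UNIV. \<Sum>z\<in>UNIV - {y}. Q u z y * p u z - Q u y z * p u y)) (at u within {s..T})"
      by (intro DERIV_sum fwd_deriv[OF assms(1) u])
    also have "(\<Sum>y\<in>UNIV. \<Sum>z\<in>UNIV - {y}. Q u z y * p u z - Q u y z * p u y) = 0"
      using offdiag_swap[of "\<lambda>z y. Q u z y * p u z"] by (simp add: sum_subtractf)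
    finally show ?thesis .
  qed
  then obtain c where "\<forall>u\<in>{s..T}. (\<Sum>y\<in>UNIV. p u y) = c"
    using has_field_derivative_zero_constant[of "{s..T}"] by blast
  then show ?thesis using assms(2) by auto
qed

lemma fwd_nonneg:
  assumes s: "s \<in> {0..T}" and p: "fwd_sol Q T s p" and p0: "\<And>w. 0 \<le> p s w" and t: "t \<in> {s..T}"
  shows "0 \<le> p t y"
proof (rule ccontr)
  assume "\<not> 0 \<le> p t y"
  then have neg: "p t y < 0" by simp
  obtain B where B: "B > 0" "\<And>t x y. t \<in> {0..T} \<Longrightarrow> \<bar>Q t x y\<bar> \<le> B" using Qbound by blast
  define K where "K = real CARD('x) * B + 1"
  define e where "e = - p t y * exp (- K * (t - s))"
  have epos: "e > 0" using neg by (simp add: e_def mult_less_0_iff)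
  define z where "z u w = p u w + e * exp (K * (u - s))" for u w
  have zty: "z t y = 0"
    unfolding z_def e_def by (simp add: mult.assoc exp_add[symmetric])
  have cz: "continuous_on {s..T} (\<lambda>u. z u w)" for w
    unfolding z_def by (intro continuous_intros fwd_cont[OF p])
  define S where "S = (\<Union>w::'x. {s..T} \<inter> (\<lambda>u. z u w) -` {..0})"
  have clS: "closed S" unfolding S_def
    by (intro closed_UN ballI continuous_closed_preimage cz closed_atLeastAtMost closed_atMost) auto
  have tS: "t \<in> S" unfolding S_def using t zty by (intro UN_I[of y]) auto
  have Ssub: "S \<subseteq> {s..T}" by (auto simp: S_def)
  define \<tau> where "\<tau> = Inf S"
  have bddS: "bdd_below S" using Ssub by (meson bdd_below_Icc bdd_below_mono)
  have tauS: "\<tau> \<in> S" unfolding \<tau>_def using tS bddS clS by (intro closed_contains_Inf) auto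
  then obtain y0 where y0: "z \<tau> y0 \<le> 0" and tauI: "\<tau> \<in> {s..T}" by (auto simp: S_def)
  have below: "z u w > 0" if "s \<le> u" "u < \<tau>" for u w
  proof (rule ccontr)
    assume "\<not> z u w > 0"
    then have "u \<in> S" using that tauI unfolding S_def by (intro UN_I[of w]) auto
    then have "\<tau> \<le> u" unfolding \<tau>_def using bddS by (rule cInf_lower)
    then show False using that by simp
  qed
  have "z s y0 > 0" using p0[of y0] epos by (simp add: z_def)
  then have "\<tau> \<noteq> s" using y0 by auto
  then have stau: "s < \<tau>" using tauI by auto
  have geq: "z \<tau> w \<ge> 0" for w
    by (rule left_limit_nonneg[OF cz stau]) (use tauI below in auto)
  define E where "E = e * exp (K * (\<tau> - s))"
  have Epos: "E > 0" using epos by (simp add: E_def)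
  have py0: "p \<tau> y0 = - E" using y0 geq[of y0] by (simp add: z_def E_def)
  have pw: "p \<tau> w \<ge> - E" for w using geq[of w] by (simp add: z_def E_def)
  have tau0: "\<tau> \<in> {0..T}" using tauI s by auto
  define Dp where "Dp = (\<Sum>w\<in>UNIV - {y0}. Q \<tau> w y0 * p \<tau> w - Q \<tau> y0 w * p \<tau> y0)"
  have dz: "((\<lambda>u. z u y0) has_real_derivative (Dp + e * (exp (K * (\<tau> - s)) * K))) (at \<tau> within {s..T})"
    unfolding z_def Dp_def
    apply (rule DERIV_add[OF fwd_deriv[OF p tauI]])
    apply (rule DERIV_cmult)
    apply (auto intro!: derivative_eq_intros)
    done
  have trm: "- (B * E) \<le> Q \<tau> w y0 * p \<tau> w - Q \<tau> y0 w * p \<tau> y0" if "w \<in> UNIV - {y0}" for w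
  proof -
    have q1: "0 \<le> Q \<tau> w y0" "Q \<tau> w y0 \<le> B" using Qnn[OF tau0] B(2)[OF tau0, of w y0] that by auto
    have q2: "0 \<le> Q \<tau> y0 w" using Qnn[OF tau0] that by auto
    have "Q \<tau> w y0 * (- E) \<le> Q \<tau> w y0 * p \<tau> w" using q1 pw by (intro mult_left_mono) auto
    moreover have "- (B * E) \<le> Q \<tau> w y0 * (- E)" using q1 Epos by (simp add: mult_right_mono)
    moreover have "0 \<le> - Q \<tau> y0 w * p \<tau> y0" using q2 Epos py0 by simp
    ultimately show ?thesis by linarith
  qed
  have "(\<Sum>w\<in>UNIV - {y0}. - (B * E)) \<le> Dp" unfolding Dp_def by (rule sum_mono) (rule trm)
  moreover have "(\<Sum>w\<in>UNIV - {y0}. - (B * E)) \<ge> - (real CARD('x) * B * E)"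
  proof -
    have "real (card (UNIV - {y0 :: 'x})) \<le> real CARD('x)" by (simp add: card_Diff_subset)
    then have "real (card (UNIV - {y0 :: 'x})) * (B * E) \<le> real CARD('x) * (B * E)"
      using B(1) Epos by (intro mult_right_mono) auto
    then show ?thesis by simp
  qed
  ultimately have "Dp + e * (exp (K * (\<tau> - s)) * K) > 0"
    using Epos by (simp add: E_def K_def algebra_simps)
  from deriv_pos_left[OF dz this stau] tauI obtain u where u: "s \<le> u" "u < \<tau>" "z u y0 < z \<tau> y0" by auto
  then show False using below[OF u(1,2), of y0] y0 by simp
qed

definition M where "M s x t y = trans_prob Q T s x t y"

lemma M_eq:
  assumes "s \<in> {0..T}" "fwd_sol Q T s p" "p s = dirac x" "t \<in> {s..T}"
  shows "M s x t y = p t y"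
proof -
  have "(THE v. \<exists>p. fwd_sol Q T s p \<and> p s = dirac x \<and> p t y = v) = p t y"
  proof (rule the_equality)
    show "\<exists>pa. fwd_sol Q T s pa \<and> pa s = dirac x \<and> pa t y = p t y" using assms by blast
    fix v assume "\<exists>pa. fwd_sol Q T s pa \<and> pa s = dirac x \<and> pa t y = v"
    then obtain q where q: "fwd_sol Q T s q" "q s = dirac x" "q t y = v" by blast
    have "q t = p t" using Quniq[OF assms(1) q(1) assms(2)] q(2) assms(3,4) by auto
    then show "v = p t y" using q(3) by simp
  qed
  then show ?thesis unfolding M_def trans_prob_def .
qed

lemma M_sol:
  assumes "s \<in> {0..T}"
  shows "fwd_sol Q T s (\<lambda>t y. M s x t y)" "M s x s = dirac x"
proof -
  obtain p where p: "fwd_sol Q T s p" "p s = dirac x" using Qex[OF assms] by blast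
  show "fwd_sol Q T s (\<lambda>t y. M s x t y)"
    by (rule fwd_cong[OF p(1)]) (use M_eq[OF assms p] in auto)
  show "M s x s = dirac x" using M_eq[OF assms p, of s] assms p(2) by auto
qed

lemma superpos:
  assumes "s \<in> {0..T}" "fwd_sol Q T s p" "t \<in> {s..T}"
  shows "p t y = (\<Sum>x\<in>UNIV. p s x * M s x t y)"
proof -
  have f: "fwd_sol Q T s (\<lambda>t y. \<Sum>x\<in>UNIV. p s x * M s x t y)"
    by (rule fwd_lin) (use M_sol[OF assms(1)] in auto)
  have "(\<lambda>y. \<Sum>x\<in>UNIV. p s x * M s x s y) = p s"
  proof
    fix y
    have "(\<Sum>x\<in>UNIV. p s x * M s x s y) = (\<Sum>x\<in>UNIV. if x = y then p s x else 0)"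
      using M_sol(2)[OF assms(1)] by (intro sum.cong) (auto simp: dirac_def)
    then show "(\<Sum>x\<in>UNIV. p s x * M s x s y) = p s y" by simp
  qed
  then have "p t = (\<lambda>y. \<Sum>x\<in>UNIV. p s x * M s x t y)"
    using Quniq[OF assms(1,2) f _ assms(3)] by auto
  then show ?thesis by (rule fun_cong)
qed

lemma full_form:
  assumes "t \<in> {0..T}"
  shows "(\<Sum>y\<in>UNIV - {x}. Q t y x * p y - Q t x y * p x) = (\<Sum>y\<in>UNIV. Q t y x * p y)"
proof -
  have "(\<Sum>y\<in>UNIV. Q t y x * p y) = (\<Sum>y\<in>UNIV-{x}. Q t y x * p y) + Q t x x * p x"
    by (simp add: sum_diff1)
  also have "Q t x x * p x = - (\<Sum>y\<in>UNIV - {x}. Q t x y * p x)"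
    using Qdiag[OF assms, of x] by (simp add: sum_distrib_right)
  finally show ?thesis by (simp add: sum_subtractf)
qed

lemma M_nonneg: "s \<in> {0..T} \<Longrightarrow> t \<in> {s..T} \<Longrightarrow> 0 \<le> M s x t y"
  by (rule fwd_nonneg[OF _ M_sol(1)]) (auto simp: M_sol(2) dirac_def)

lemma M_sum: "s \<in> {0..T} \<Longrightarrow> t \<in> {s..T} \<Longrightarrow> (\<Sum>y\<in>UNIV. M s x t y) = 1"
proof -
  assume a: "s \<in> {0..T}" "t \<in> {s..T}"
  have "(\<Sum>y\<in>UNIV. M s x t y) = (\<Sum>y\<in>UNIV. M s x s y)"
    by (rule fwd_sum[OF M_sol(1)[OF a(1)] a(2)])
  then show ?thesis using M_sol(2)[OF a(1)] by (simp add: sum_dirac0)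
qed

lemma M_le1: "s \<in> {0..T} \<Longrightarrow> t \<in> {s..T} \<Longrightarrow> M s x t y \<le> 1"
proof -
  assume a: "s \<in> {0..T}" "t \<in> {s..T}"
  have "M s x t y \<le> (\<Sum>y\<in>UNIV. M s x t y)"
    by (rule member_le_sum) (use M_nonneg[OF a] in auto)
  then show ?thesis using M_sum[OF a] by simp
qed

lemma CK:
  assumes "s \<in> {0..T}" "t \<in> {s..T}" "u \<in> {t..T}"
  shows "M s x u y = (\<Sum>z\<in>UNIV. M s x t z * M t z u y)"
proof -
  have t0: "t \<in> {0..T}" using assms by auto
  have "fwd_sol Q T t (\<lambda>t y. M s x t y)"
    by (rule fwd_restrict[OF M_sol(1)[OF assms(1)]]) (use assms in auto)
  from superpos[OF t0 this assms(3)] show ?thesis .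
qed

definition Bq where "Bq = (SOME B. B > 0 \<and> (\<forall>t\<in>{0..T}. \<forall>x y. \<bar>Q t x y\<bar> \<le> B))"

lemma Bq: "Bq > 0" "t \<in> {0..T} \<Longrightarrow> \<bar>Q t x y\<bar> \<le> Bq"
proof -
  have "Bq > 0 \<and> (\<forall>t\<in>{0..T}. \<forall>x y. \<bar>Q t x y\<bar> \<le> Bq)"
    unfolding Bq_def using Qbound by (rule someI_ex)
  then show "Bq > 0" "t \<in> {0..T} \<Longrightarrow> \<bar>Q t x y\<bar> \<le> Bq" by auto
qed

definition KM where "KM = 2 * real CARD('x) * Bq"

lemma KM_pos: "KM > 0" using Bq(1) by (simp add: KM_def)

lemma M_lip:
  assumes "0 \<le> a" "a \<le> u" "u \<le> T"
  shows "\<bar>M a x u z - dirac x z\<bar> \<le> KM * (u - a)"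
proof -
  have a0: "a \<in> {0..T}" using assms by auto
  have d: "((\<lambda>v. M a x v z) has_real_derivative
        (\<Sum>y\<in>UNIV - {z}. Q v y z * M a x v y - Q v z y * M a x v z)) (at v within {a..u})"
    if "v \<in> {a..u}" for v
    by (rule has_field_derivative_subset[OF fwd_deriv[OF M_sol(1)[OF a0]]]) (use that assms in auto)
  have bnd: "norm (\<Sum>y\<in>UNIV - {z}. Q v y z * M a x v y - Q v z y * M a x v z) \<le> KM"
    if "v \<in> {a..u}" for v
  proof -
    have v0: "v \<in> {0..T}" and va: "v \<in> {a..T}" using that assms by auto
    have "\<bar>Q v y z * M a x v y - Q v z y * M a x v z\<bar> \<le> 2 * Bq" for y
    proof -
      have "\<bar>Q v y z * M a x v y\<bar> \<le> Bq * 1"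
        unfolding abs_mult by (intro mult_mono Bq(2)[OF v0]) (use M_nonneg[OF a0 va] M_le1[OF a0 va] Bq(1) in auto)
      moreover have "\<bar>Q v z y * M a x v z\<bar> \<le> Bq * 1"
        unfolding abs_mult by (intro mult_mono Bq(2)[OF v0]) (use M_nonneg[OF a0 va] M_le1[OF a0 va] Bq(1) in auto)
      ultimately show ?thesis by linarith
    qed
    then have "norm (\<Sum>y\<in>UNIV - {z}. Q v y z * M a x v y - Q v z y * M a x v z) \<le> (\<Sum>y\<in>UNIV - {z}. 2 * Bq)"
      unfolding real_norm_def by (intro sum_abs[THEN order_trans] sum_mono) auto
    also have "\<dots> \<le> KM"
    proof -
      have "real (card (UNIV - {z})) \<le> real CARD('x)" by (simp add: card_Diff_subset)
      then show ?thesis using Bq(1) by (simp add: KM_def)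
    qed
    finally show ?thesis .
  qed
  have "norm (M a x u z - M a x a z) \<le> KM * norm (u - a)"
    by (rule field_differentiable_bound[OF convex_real_interval(5) d bnd]) (use assms in auto)
  then show ?thesis using M_sol(2)[OF a0] assms by simp
qed

definition bw where "bw f t x = (\<Sum>y\<in>UNIV. M t x T y * f y)"

lemma bw_CK:
  assumes "a \<in> {0..T}" "b \<in> {a..T}"
  shows "bw f a x = (\<Sum>z\<in>UNIV. M a x b z * bw f b z)"
proof -
  have "bw f a x = (\<Sum>y\<in>UNIV. (\<Sum>z\<in>UNIV. M a x b z * M b z T y) * f y)"
    unfolding bw_def using CK[OF assms, of T] assms by simp
  also have "\<dots> = (\<Sum>z\<in>UNIV. M a x b z * bw f b z)"
    unfolding bw_def sum_distrib_right sum_distrib_left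
    by (subst sum.swap) (simp add: mult.assoc)
  finally show ?thesis .
qed

lemma bw_T: "0 \<le> T \<Longrightarrow> bw f T x = f x"
  unfolding bw_def using M_sol(2)[of T x] by (simp add: sum_dirac2)

definition Fb where "Fb f = (\<Sum>y\<in>UNIV. \<bar>f y\<bar>)"

lemma bw_bound: assumes "t \<in> {0..T}" shows "\<bar>bw f t x\<bar> \<le> Fb f"
proof -
  have "\<bar>bw f t x\<bar> \<le> (\<Sum>y\<in>UNIV. \<bar>M t x T y * f y\<bar>)" unfolding bw_def by (rule sum_abs)
  also have "\<dots> \<le> (\<Sum>y\<in>UNIV. \<bar>f y\<bar>)"
    unfolding abs_mult
    by (intro sum_mono mult_left_le_one_le) (use M_nonneg[OF assms] M_le1[OF assms] assms in auto)
  finally show ?thesis unfolding Fb_def .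
qed

lemma bw_diff:
  assumes "0 \<le> a" "a \<le> b" "b \<le> T"
  shows "bw f a x - bw f b x = (\<Sum>z\<in>UNIV. (M a x b z - dirac x z) * bw f b z)"
  using bw_CK[of a b f x] assms by (simp add: left_diff_distrib sum_subtractf sum_dirac2)

lemma bw_lip:
  assumes "0 \<le> a" "a \<le> b" "b \<le> T"
  shows "\<bar>bw f a x - bw f b x\<bar> \<le> real CARD('x) * KM * Fb f * (b - a)"
proof -
  have "\<bar>bw f a x - bw f b x\<bar> \<le> (\<Sum>z\<in>UNIV. \<bar>(M a x b z - dirac x z) * bw f b z\<bar>)"
    unfolding bw_diff[OF assms] by (rule sum_abs)
  also have "\<dots> \<le> (\<Sum>z\<in>(UNIV::'x set). KM * (b - a) * Fb f)"
    unfolding abs_mult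
  proof (rule sum_mono)
    fix z
    show "\<bar>M a x b z - dirac x z\<bar> * \<bar>bw f b z\<bar> \<le> KM * (b - a) * Fb f"
      by (rule mult_mono[OF M_lip[OF assms] bw_bound]) (use assms KM_pos in auto)
  qed
  also have "\<dots> = real CARD('x) * KM * Fb f * (b - a)" by simp
  finally show ?thesis .
qed

end

context gen begin

lemma Qunif:
  assumes t0: "t0 \<in> {0..T}" and eta: "\<eta> > 0"
  shows "\<exists>d>0. \<forall>u\<in>{0..T}. \<bar>u - t0\<bar> < d \<longrightarrow> (\<forall>x z. \<bar>Q u x z - Q t0 x z\<bar> \<le> \<eta>)"
proof -
  have "eventually (\<lambda>u. dist (Q u (fst xz) (snd xz)) (Q t0 (fst xz) (snd xz)) < \<eta>) (at t0 within {0..T})"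
    for xz :: "'x \<times> 'x"
  proof -
    have "((\<lambda>u. Q u (fst xz) (snd xz)) \<longlongrightarrow> Q t0 (fst xz) (snd xz)) (at t0 within {0..T})"
      using Qcont[of "fst xz" "snd xz"] t0 unfolding continuous_on_def by blast
    then show ?thesis using eta by (rule tendstoD)
  qed
  then have "eventually (\<lambda>u. \<forall>xz::'x\<times>'x. dist (Q u (fst xz) (snd xz)) (Q t0 (fst xz) (snd xz)) < \<eta>) (at t0 within {0..T})"
    by (rule eventually_all_finite)
  then obtain d where d: "d > 0" "\<And>u. u \<in> {0..T} \<Longrightarrow> u \<noteq> t0 \<Longrightarrow> dist u t0 < d \<Longrightarrow>
      (\<forall>xz::'x\<times>'x. dist (Q u (fst xz) (snd xz)) (Q t0 (fst xz) (snd xz)) < \<eta>)"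
    unfolding eventually_at by blast
  have "\<forall>u\<in>{0..T}. \<bar>u - t0\<bar> < d \<longrightarrow> (\<forall>x z. \<bar>Q u x z - Q t0 x z\<bar> \<le> \<eta>)"
  proof (intro ballI impI allI)
    fix u x z assume u: "u \<in> {0..T}" "\<bar>u - t0\<bar> < d"
    show "\<bar>Q u x z - Q t0 x z\<bar> \<le> \<eta>"
    proof (cases "u = t0")
      case True then show ?thesis using eta by simp
    next
      case False
      then have "dist (Q u x z) (Q t0 x z) < \<eta>"
        using d(2)[OF u(1) False] u(2) by (auto simp: dist_real_def dest: spec[of _ "(x,z)"])
      then show ?thesis by (simp add: dist_real_def)
    qed
  qed
  then show ?thesis using d(1) by blast
qed

lemma M_step:
  assumes ab: "0 \<le> a" "a < b" "b \<le> T" and t0: "t0 = a \<or> t0 = b"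
    and eta: "\<forall>u\<in>{0..T}. \<bar>u - t0\<bar> \<le> b - a \<longrightarrow> (\<forall>x z. \<bar>Q u x z - Q t0 x z\<bar> \<le> \<eta>)"
  shows "\<bar>M a x b z - dirac x z - (b - a) * Q t0 x z\<bar> \<le> (real CARD('x) * Bq * KM * (b - a) + \<eta>) * (b - a)"
proof -
  have a0: "a \<in> {0..T}" using ab by auto
  define g where "g v = M a x v z - (v - a) * Q t0 x z" for v
  have d: "(g has_real_derivative
        ((\<Sum>y\<in>UNIV - {z}. Q v y z * M a x v y - Q v z y * M a x v z) - Q t0 x z)) (at v within {a..b})"
    if "v \<in> {a..b}" for v
    unfolding g_def
    apply (rule DERIV_diff)
     apply (rule has_field_derivative_subset[OF fwd_deriv[OF M_sol(1)[OF a0]]])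
    using that ab apply auto[2]
    apply (auto intro!: derivative_eq_intros)
    done
  have bnd: "norm ((\<Sum>y\<in>UNIV - {z}. Q v y z * M a x v y - Q v z y * M a x v z) - Q t0 x z)
     \<le> real CARD('x) * Bq * KM * (b - a) + \<eta>"
    if v: "v \<in> {a..b}" for v
  proof -
    have v0: "v \<in> {0..T}" and va: "v \<in> {a..T}" using v ab by auto
    have "(\<Sum>y\<in>UNIV - {z}. Q v y z * M a x v y - Q v z y * M a x v z) - Q t0 x z
        = (\<Sum>y\<in>UNIV. Q v y z * (M a x v y - dirac x y)) + (Q v x z - Q t0 x z)"
      using full_form[OF v0, of z "M a x v"] sum_dirac1[of "\<lambda>y. Q v y z" x]
      by (simp add: right_diff_distrib sum_subtractf)
    moreover have "\<bar>\<Sum>y\<in>UNIV. Q v y z * (M a x v y - dirac x y)\<bar> \<le> real CARD('x) * Bq * KM * (b - a)"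
    proof -
      have "\<bar>\<Sum>y\<in>UNIV. Q v y z * (M a x v y - dirac x y)\<bar> \<le> (\<Sum>y\<in>UNIV. \<bar>Q v y z * (M a x v y - dirac x y)\<bar>)"
        by (rule sum_abs)
      also have "\<dots> \<le> (\<Sum>y\<in>(UNIV::'x set). Bq * (KM * (b - a)))"
        unfolding abs_mult
      proof (rule sum_mono)
        fix y
        have "\<bar>M a x v y - dirac x y\<bar> \<le> KM * (v - a)" using M_lip[of a v x y] v ab by auto
        also have "\<dots> \<le> KM * (b - a)" using v KM_pos by (intro mult_left_mono) auto
        finally show "\<bar>Q v y z\<bar> * \<bar>M a x v y - dirac x y\<bar> \<le> Bq * (KM * (b - a))"
          by (intro mult_mono Bq(2)[OF v0]) (use Bq(1) in auto)
      qed
      also have "\<dots> = real CARD('x) * Bq * KM * (b - a)" by simp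
      finally show ?thesis .
    qed
    moreover have "\<bar>Q v x z - Q t0 x z\<bar> \<le> \<eta>"
      using eta v0 v t0 by auto
    ultimately show ?thesis unfolding real_norm_def by linarith
  qed
  have "norm (g b - g a) \<le> (real CARD('x) * Bq * KM * (b - a) + \<eta>) * norm (b - a)"
    by (rule field_differentiable_bound[OF convex_real_interval(5) d bnd]) (use ab in auto)
  moreover have "g a = dirac x z" unfolding g_def using M_sol(2)[OF a0] by simp
  ultimately show ?thesis using ab unfolding g_def by simp
qed

lemma bw_est:
  assumes ab: "0 \<le> a" "a < b" "b \<le> T" and t0: "t0 = a \<or> t0 = b"
    and eta: "\<forall>u\<in>{0..T}. \<bar>u - t0\<bar> \<le> b - a \<longrightarrow> (\<forall>x z. \<bar>Q u x z - Q t0 x z\<bar> \<le> \<eta>)"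
  shows "\<bar>bw f a x - bw f b x - (b - a) * (\<Sum>z\<in>UNIV. Q t0 x z * bw f t0 z)\<bar>
     \<le> (b - a) * (2 * real CARD('x) * real CARD('x) * Bq * KM * Fb f * (b - a) + real CARD('x) * Fb f * \<eta>)"
proof -
  define N where "N = real CARD('x)"
  define h where "h = b - a"
  define C where "C = N * Bq * KM * h + \<eta>"
  have h: "h > 0" using ab by (simp add: h_def)
  have t00: "t0 \<in> {0..T}" using t0 ab by auto
  have eq: "bw f a x - bw f b x - h * (\<Sum>z\<in>UNIV. Q t0 x z * bw f t0 z)
     = (\<Sum>z\<in>UNIV. (M a x b z - dirac x z - h * Q t0 x z) * bw f b z)
       + h * (\<Sum>z\<in>UNIV. Q t0 x z * (bw f b z - bw f t0 z))"
  proof -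
    have 1: "(\<Sum>z\<in>UNIV. (M a x b z - dirac x z - h * Q t0 x z) * bw f b z)
      = (\<Sum>z\<in>UNIV. (M a x b z - dirac x z) * bw f b z) - h * (\<Sum>z\<in>UNIV. Q t0 x z * bw f b z)"
      by (simp add: left_diff_distrib sum_subtractf sum_distrib_left mult.assoc)
    have 2: "h * (\<Sum>z\<in>UNIV. Q t0 x z * (bw f b z - bw f t0 z))
      = h * (\<Sum>z\<in>UNIV. Q t0 x z * bw f b z) - h * (\<Sum>z\<in>UNIV. Q t0 x z * bw f t0 z)"
      by (simp add: right_diff_distrib sum_subtractf)
    show ?thesis
      unfolding bw_diff[OF ab(1) less_imp_le[OF ab(2)] ab(3)] 1 2 by simp
  qed
  have e1: "\<bar>\<Sum>z\<in>UNIV. (M a x b z - dirac x z - h * Q t0 x z) * bw f b z\<bar> \<le> N * (C * h) * Fb f"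
  proof -
    have "\<bar>\<Sum>z\<in>UNIV. (M a x b z - dirac x z - h * Q t0 x z) * bw f b z\<bar>
       \<le> (\<Sum>z\<in>UNIV. \<bar>(M a x b z - dirac x z - h * Q t0 x z) * bw f b z\<bar>)" by (rule sum_abs)
    also have "\<dots> \<le> (\<Sum>z\<in>(UNIV::'x set). (C * h) * Fb f)"
      unfolding abs_mult
    proof (rule sum_mono)
      fix z
      have "\<bar>M a x b z - dirac x z - h * Q t0 x z\<bar> \<le> C * h"
        using M_step[OF ab t0 eta, of x z] by (simp add: C_def h_def N_def)
      moreover have "\<bar>bw f b z\<bar> \<le> Fb f" using bw_bound[of b] ab by auto
      ultimately show "\<bar>M a x b z - dirac x z - h * Q t0 x z\<bar> * \<bar>bw f b z\<bar> \<le> C * h * Fb f"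
        by (intro mult_mono) auto
    qed
    also have "\<dots> = N * (C * h) * Fb f" by (simp add: N_def)
    finally show ?thesis .
  qed
  have e2: "\<bar>\<Sum>z\<in>UNIV. Q t0 x z * (bw f b z - bw f t0 z)\<bar> \<le> N * (Bq * (N * KM * Fb f * h))"
  proof -
    have "\<bar>\<Sum>z\<in>UNIV. Q t0 x z * (bw f b z - bw f t0 z)\<bar>
       \<le> (\<Sum>z\<in>UNIV. \<bar>Q t0 x z * (bw f b z - bw f t0 z)\<bar>)" by (rule sum_abs)
    also have "\<dots> \<le> (\<Sum>z\<in>(UNIV::'x set). Bq * (N * KM * Fb f * h))"
      unfolding abs_mult
    proof (rule sum_mono)
      fix z
      have "\<bar>bw f b z - bw f t0 z\<bar> \<le> N * KM * Fb f * h"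
        using t0
      proof
        assume "t0 = a"
        then show ?thesis using bw_lip[OF ab(1) less_imp_le[OF ab(2)] ab(3), of f z]
          by (simp add: N_def h_def abs_minus_commute)
      next
        assume "t0 = b"
        then show ?thesis using h KM_pos by (simp add: N_def Fb_def sum_nonneg)
      qed
      then show "\<bar>Q t0 x z\<bar> * \<bar>bw f b z - bw f t0 z\<bar> \<le> Bq * (N * KM * Fb f * h)"
        by (intro mult_mono Bq(2)[OF t00]) (use Bq(1) in auto)
    qed
    also have "\<dots> = N * (Bq * (N * KM * Fb f * h))" by (simp add: N_def)
    finally show ?thesis .
  qed
  have "\<bar>bw f a x - bw f b x - h * (\<Sum>z\<in>UNIV. Q t0 x z * bw f t0 z)\<bar>
      \<le> N * (C * h) * Fb f + h * (N * (Bq * (N * KM * Fb f * h)))"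
  proof -
    have "\<bar>h * (\<Sum>z\<in>UNIV. Q t0 x z * (bw f b z - bw f t0 z))\<bar>
       = h * \<bar>\<Sum>z\<in>UNIV. Q t0 x z * (bw f b z - bw f t0 z)\<bar>" using h by (simp add: abs_mult)
    also have "\<dots> \<le> h * (N * (Bq * (N * KM * Fb f * h)))" using e2 h by (intro mult_left_mono) auto
    finally have e2': "\<bar>h * (\<Sum>z\<in>UNIV. Q t0 x z * (bw f b z - bw f t0 z))\<bar> \<le> h * (N * (Bq * (N * KM * Fb f * h)))" .
    show ?thesis unfolding eq
      by (rule order_trans[OF abs_triangle_ineq add_mono[OF e1 e2']])
  qed
  also have "\<dots> = h * (2 * N * N * Bq * KM * Fb f * h + N * Fb f * \<eta>)"
    by (simp add: C_def algebra_simps)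
  finally show ?thesis unfolding h_def N_def .
qed


lemma Fb_nonneg: "Fb (f::'x \<Rightarrow> real) \<ge> 0" unfolding Fb_def by (rule sum_nonneg) simp

lemma bw_deriv:
  assumes t0: "t0 \<in> {0..T}"
  shows "((\<lambda>t. bw f t x) has_real_derivative (- (\<Sum>z\<in>UNIV. Q t0 x z * bw f t0 z))) (at t0 within {0..T})"
proof (rule deriv_from_bound)
  fix e :: real assume e: "e > 0"
  define N where "N = real CARD('x)"
  define S where "S = (\<Sum>z\<in>UNIV. Q t0 x z * bw f t0 z)"
  define C0 where "C0 = 2 * N * N * Bq * KM * Fb f"
  define C1 where "C1 = N * Fb f"
  have C0: "C0 \<ge> 0" unfolding C0_def N_def using Bq(1) KM_pos Fb_nonneg[of f] by simp
  have C1: "C1 \<ge> 0" unfolding C1_def N_def using Fb_nonneg[of f] by simp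
  define \<eta> where "\<eta> = e / (2 * (C1 + 1))"
  have eta: "\<eta> > 0" using e C1 by (simp add: \<eta>_def)
  obtain d1 where d1: "d1 > 0" "\<forall>u\<in>{0..T}. \<bar>u - t0\<bar> < d1 \<longrightarrow> (\<forall>x z. \<bar>Q u x z - Q t0 x z\<bar> \<le> \<eta>)"
    using Qunif[OF t0 eta] by blast
  define d where "d = min d1 (e / (2 * (C0 + 1)))"
  have d: "d > 0" using d1 e C0 by (simp add: d_def)
  have "\<forall>t\<in>{0..T}. t \<noteq> t0 \<and> \<bar>t - t0\<bar> < d \<longrightarrow>
      \<bar>(bw f t x - bw f t0 x) / (t - t0) - - S\<bar> \<le> e"
  proof (intro ballI impI)
    fix t assume t: "t \<in> {0..T}" and tt: "t \<noteq> t0 \<and> \<bar>t - t0\<bar> < d"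
    define a where "a = min t t0"
    define b where "b = max t t0"
    define h where "h = b - a"
    have ab: "0 \<le> a" "a < b" "b \<le> T" "t0 = a \<or> t0 = b" using t t0 tt by (auto simp: a_def b_def)
    have hh: "h = \<bar>t - t0\<bar>" by (auto simp: h_def a_def b_def)
    have hpos: "h > 0" using ab by (simp add: h_def)
    have etah: "\<forall>u\<in>{0..T}. \<bar>u - t0\<bar> \<le> b - a \<longrightarrow> (\<forall>x z. \<bar>Q u x z - Q t0 x z\<bar> \<le> \<eta>)"
      using d1(2) tt hh unfolding h_def d_def by auto
    have est: "\<bar>bw f a x - bw f b x - h * S\<bar> \<le> h * (C0 * h + C1 * \<eta>)"
      using bw_est[OF ab etah, of f x] unfolding S_def C0_def C1_def N_def h_def by simp
    have quot: "(bw f t x - bw f t0 x) / (t - t0) - - S = - ((bw f a x - bw f b x - h * S) / h)"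
    proof (cases "t < t0")
      case True
      then have e1: "a = t" "b = t0" "t - t0 = - h" by (auto simp: a_def b_def h_def)
      show ?thesis unfolding e1 using hpos by (simp add: field_simps)
    next
      case False
      then have e1: "a = t0" "b = t" "t - t0 = h" using tt by (auto simp: a_def b_def h_def)
      show ?thesis unfolding e1 using hpos by (simp add: field_simps)
    qed
    have "\<bar>(bw f t x - bw f t0 x) / (t - t0) - - S\<bar> = \<bar>bw f a x - bw f b x - h * S\<bar> / h"
      unfolding quot using hpos by simp
    also have "\<dots> \<le> C0 * h + C1 * \<eta>"
      using est hpos by (simp add: divide_le_eq mult.commute)
    also have "C0 * h \<le> e / 2"
    proof -
      have "h \<le> e / (2 * (C0 + 1))" using tt hh by (simp add: d_def)
      then have "C0 * h \<le> C0 * (e / (2 * (C0 + 1)))" using C0 by (intro mult_left_mono)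
      also have "\<dots> \<le> e / 2" using C0 e by (simp add: field_simps)
      finally show ?thesis .
    qed
    also have "C1 * \<eta> \<le> e / 2" using C1 e by (simp add: \<eta>_def field_simps)
    finally show "\<bar>(bw f t x - bw f t0 x) / (t - t0) - - S\<bar> \<le> e" by simp
  qed
  then show "\<exists>d>0. \<forall>t\<in>{0..T}. t \<noteq> t0 \<and> \<bar>t - t0\<bar> < d \<longrightarrow>
      \<bar>(bw f t x - bw f t0 x) / (t - t0) - - (\<Sum>z\<in>UNIV. Q t0 x z * bw f t0 z)\<bar> \<le> e"
    using d unfolding S_def by blast
qed

lemma bw_cont: "continuous_on {0..T} (\<lambda>t. bw f t x)"
  by (rule DERIV_continuous_on[OF bw_deriv])

end

context gen begin
lemma fwd_scale:
  assumes "fwd_sol Q T s p"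
  shows "fwd_sol Q T s (\<lambda>t y. c * p t y)"
  using fwd_lin[of "{0::nat}" s "\<lambda>_. p" "\<lambda>_. c"] assms by simp
end

lemma fwd_transfer:
  assumes "fwd_sol Q1 T s p"
    and "\<And>t x y. t \<in> {s..T} \<Longrightarrow> x \<noteq> y \<Longrightarrow> Q1 t x y * p t x = Q2 t x y * p t x"
  shows "fwd_sol Q2 T s p"
  unfolding fwd_sol_def
proof (intro ballI allI)
  fix t x assume t: "t \<in> {s..T}"
  have "((\<lambda>u. p u x) has_real_derivative
        (\<Sum>y\<in>UNIV - {x}. Q1 t y x * p t y - Q1 t x y * p t x)) (at t within {s..T})"
    using assms(1) t unfolding fwd_sol_def by blast
  moreover have "(\<Sum>y\<in>UNIV - {x}. Q1 t y x * p t y - Q1 t x y * p t x)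
     = (\<Sum>y\<in>UNIV - {x}. Q2 t y x * p t y - Q2 t x y * p t x)"
  proof (rule sum.cong[OF refl])
    fix y assume "y \<in> UNIV - {x}"
    then have "y \<noteq> x" "x \<noteq> y" by auto
    then show "Q1 t y x * p t y - Q1 t x y * p t x = Q2 t y x * p t y - Q2 t x y * p t x"
    proof -
      have e1: "Q1 t y x * p t y = Q2 t y x * p t y" using assms(2)[OF t] \<open>y \<noteq> x\<close> by blast
      have e2: "Q1 t x y * p t x = Q2 t x y * p t x" using assms(2)[OF t] \<open>x \<noteq> y\<close> by blast
      show ?thesis by (simp only: e1 e2)
    qed
  qed
  ultimately show "((\<lambda>u. p u x) has_real_derivative
        (\<Sum>y\<in>UNIV - {x}. Q2 t y x * p t y - Q2 t x y * p t x)) (at t within {s..T})" by simp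
qed

locale htr = pre: gen Qpre T for Qpre :: "real \<Rightarrow> 'x::finite \<Rightarrow> 'x \<Rightarrow> real" and T :: real +
  fixes \<alpha> :: real and r :: "'x \<Rightarrow> real"
  assumes Tpos: "T > 0" and apos: "\<alpha> > 0"
begin

definition phi where "phi t x = pre.bw (\<lambda>y. exp (r y / \<alpha>)) t x"

lemma phi_pos: assumes "t \<in> {0..T}" shows "phi t x > 0"
proof -
  have T: "T \<in> {t..T}" using assms by auto
  have "\<exists>y. pre.M t x T y > 0"
  proof (rule ccontr)
    assume "\<not> (\<exists>y. pre.M t x T y > 0)"
    then have "\<forall>y. pre.M t x T y = 0" using pre.M_nonneg[OF assms T] by (metis order.not_eq_order_implies_strict)
    then show False using pre.M_sum[OF assms T, of x] by simp
  qed
  then obtain y where y: "pre.M t x T y > 0" by blast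
  show ?thesis unfolding phi_def pre.bw_def
    by (rule sum_pos2[of UNIV y]) (use y pre.M_nonneg[OF assms T] in auto)
qed

lemma phi_T: "phi T x = exp (r x / \<alpha>)"
  unfolding phi_def using pre.bw_T Tpos by simp

lemma phi_deriv:
  assumes t: "t \<in> {0..T}"
  shows "((\<lambda>t. phi t x) has_real_derivative (- (\<Sum>y\<in>UNIV - {x}. Qpre t x y * (phi t y - phi t x)))) (at t within {0..T})"
proof -
  have "(\<Sum>z\<in>UNIV. Qpre t x z * phi t z) = (\<Sum>y\<in>UNIV - {x}. Qpre t x y * (phi t y - phi t x))"
  proof -
    have "(\<Sum>z\<in>UNIV. Qpre t x z * phi t z) = (\<Sum>z\<in>UNIV-{x}. Qpre t x z * phi t z) + Qpre t x x * phi t x"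
      by (simp add: sum_diff1)
    also have "Qpre t x x * phi t x = - (\<Sum>z\<in>UNIV-{x}. Qpre t x z * phi t x)"
      using pre.Qdiag[OF t, of x] by (simp add: sum_distrib_right)
    finally show ?thesis by (simp add: right_diff_distrib sum_subtractf)
  qed
  then show ?thesis using pre.bw_deriv[OF t, of "\<lambda>y. exp (r y / \<alpha>)" x] unfolding phi_def by simp
qed

lemma phi_cont: "continuous_on {0..T} (\<lambda>t. phi t x)"
  by (rule DERIV_continuous_on[OF phi_deriv])

lemma phi_deriv_sub:
  assumes "s \<in> {0..T}" "t \<in> {s..T}"
  shows "((\<lambda>t. phi t x) has_real_derivative (- (\<Sum>y\<in>UNIV - {x}. Qpre t x y * (phi t y - phi t x)))) (at t within {s..T})"
  by (rule has_field_derivative_subset[OF phi_deriv]) (use assms in auto)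

definition Qh where
  "Qh t x y = (if x = y then - (\<Sum>z\<in>UNIV - {x}. Qpre t x z * phi t z / phi t x)
               else Qpre t x y * phi t y / phi t x)"

lemma H1:
  assumes s: "s \<in> {0..T}" and u: "fwd_sol Qpre T s u"
  shows "fwd_sol Qh T s (\<lambda>t y. u t y * phi t y)"
  unfolding fwd_sol_def
proof (intro ballI allI)
  fix t y assume t: "t \<in> {s..T}"
  have t0: "t \<in> {0..T}" using s t by auto
  have ph: "phi t z > 0" for z using phi_pos[OF t0] .
  let ?X = "(\<Sum>z\<in>UNIV - {y}. Qpre t z y * u t z - Qpre t y z * u t y) * phi t y
      + (- (\<Sum>z\<in>UNIV - {y}. Qpre t y z * (phi t z - phi t y))) * u t y"
  have d: "((\<lambda>t. u t y * phi t y) has_real_derivative ?X) (at t within {s..T})"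
    by (rule DERIV_mult[OF pre.fwd_deriv[OF u t] phi_deriv_sub[OF s t]])
  have "?X = (\<Sum>z\<in>UNIV - {y}. (Qpre t z y * u t z - Qpre t y z * u t y) * phi t y
        - Qpre t y z * (phi t z - phi t y) * u t y)"
    by (simp add: left_diff_distrib sum_distrib_right sum_subtractf)
  also have "\<dots> = (\<Sum>z\<in>UNIV - {y}. Qh t z y * (u t z * phi t z) - Qh t y z * (u t y * phi t y))"
  proof (rule sum.cong[OF refl])
    fix z assume "z \<in> UNIV - {y}"
    then have zy: "z \<noteq> y" by auto
    show "(Qpre t z y * u t z - Qpre t y z * u t y) * phi t y - Qpre t y z * (phi t z - phi t y) * u t y
       = Qh t z y * (u t z * phi t z) - Qh t y z * (u t y * phi t y)"
      using zy ph[of z] ph[of y] unfolding Qh_def by (simp add: field_simps)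
  qed
  finally show "((\<lambda>t. u t y * phi t y) has_real_derivative
     (\<Sum>z\<in>UNIV - {y}. Qh t z y * (u t z * phi t z) - Qh t y z * (u t y * phi t y))) (at t within {s..T})"
    using d by simp
qed

lemma H2:
  assumes s: "s \<in> {0..T}" and p: "fwd_sol Qh T s p"
  shows "fwd_sol Qpre T s (\<lambda>t y. p t y / phi t y)"
  unfolding fwd_sol_def
proof (intro ballI allI)
  fix t y assume t: "t \<in> {s..T}"
  have t0: "t \<in> {0..T}" using s t by auto
  have ph: "phi t z > 0" for z using phi_pos[OF t0] .
  have dp: "((\<lambda>u. p u y) has_real_derivative
        (\<Sum>z\<in>UNIV - {y}. Qh t z y * p t z - Qh t y z * p t y)) (at t within {s..T})"
    using p t unfolding fwd_sol_def by blast
  let ?X = "((\<Sum>z\<in>UNIV - {y}. Qh t z y * p t z - Qh t y z * p t y) * phi t y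
      - p t y * (- (\<Sum>z\<in>UNIV - {y}. Qpre t y z * (phi t z - phi t y)))) / (phi t y * phi t y)"
  have d: "((\<lambda>t. p t y / phi t y) has_real_derivative ?X) (at t within {s..T})"
    by (rule DERIV_divide[OF dp phi_deriv_sub[OF s t]]) (use less_imp_neq[OF ph[of y]] in auto)
  have "?X = (\<Sum>z\<in>UNIV - {y}. ((Qh t z y * p t z - Qh t y z * p t y) * phi t y
        + p t y * (Qpre t y z * (phi t z - phi t y))) / (phi t y * phi t y))"
    unfolding sum_divide_distrib[symmetric]
    by (simp add: left_diff_distrib sum_distrib_right sum_distrib_left sum_subtractf sum.distrib)
  also have "\<dots> = (\<Sum>z\<in>UNIV - {y}. Qpre t z y * (p t z / phi t z) - Qpre t y z * (p t y / phi t y))"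
  proof (rule sum.cong[OF refl])
    fix z assume "z \<in> UNIV - {y}"
    then have zy: "z \<noteq> y" by auto
    show "((Qh t z y * p t z - Qh t y z * p t y) * phi t y
        + p t y * (Qpre t y z * (phi t z - phi t y))) / (phi t y * phi t y)
       = Qpre t z y * (p t z / phi t z) - Qpre t y z * (p t y / phi t y)"
      using zy ph[of z] ph[of y] less_imp_neq[OF ph[of y]] less_imp_neq[OF ph[of z]]
      unfolding Qh_def by (simp add: field_simps)
  qed
  finally show "((\<lambda>t. p t y / phi t y) has_real_derivative
     (\<Sum>z\<in>UNIV - {y}. Qpre t z y * (p t z / phi t z) - Qpre t y z * (p t y / phi t y))) (at t within {s..T})"
    using d by simp
qed

lemma Qh_gen: "is_generator Qh T"
  unfolding is_generator_def
proof (intro conjI ballI allI impI)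
  fix t and x y :: 'x assume t: "t \<in> {0..T}" and xy: "x \<noteq> y"
  show "0 \<le> Qh t x y" using xy pre.Qnn[OF t xy] phi_pos[OF t, of x] phi_pos[OF t, of y]
    by (simp add: Qh_def)
next
  fix t and x :: 'x assume t: "t \<in> {0..T}"
  show "Qh t x x = - (\<Sum>y\<in>UNIV - {x}. Qh t x y)"
    unfolding Qh_def by (auto intro!: sum.cong)
next
  fix x y :: 'x
  show "continuous_on {0..T} (\<lambda>t. Qh t x y)"
    unfolding Qh_def
    by (cases "x = y")
      (auto intro!: continuous_intros pre.Qcont phi_cont simp: phi_pos[THEN less_imp_neq, THEN not_sym])
next
  fix s and x :: 'x assume s: "s \<in> {0..T}"
  have u: "fwd_sol Qpre T s (\<lambda>t y. (1 / phi s x) * pre.M s x t y)"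
    by (rule pre.fwd_scale[OF pre.M_sol(1)[OF s]])
  have "fwd_sol Qh T s (\<lambda>t y. (1 / phi s x) * pre.M s x t y * phi t y)"
    by (rule H1[OF s u])
  moreover have "(\<lambda>y. (1 / phi s x) * pre.M s x s y * phi s y) = dirac x"
    using pre.M_sol(2)[OF s] less_imp_neq[OF phi_pos[OF s, of x]] by (intro ext) (auto simp: dirac_def)
  ultimately show "\<exists>p. fwd_sol Qh T s p \<and> p s = dirac x" by blast
next
  fix s t and p q :: "real \<Rightarrow> 'x \<Rightarrow> real"
  assume s: "s \<in> {0..T}" and pq: "fwd_sol Qh T s p \<and> fwd_sol Qh T s q \<and> p s = q s" and t: "t \<in> {s..T}"
  have t0: "t \<in> {0..T}" using s t by auto
  have "(\<lambda>y. p t y / phi t y) = (\<lambda>y. q t y / phi t y)"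
    by (rule pre.Quniq[OF s H2[OF s] H2[OF s] _ t]) (use pq in auto)
  then show "p t = q t"
    using phi_pos[OF t0] by (metis (no_types, lifting) divide_cancel_right less_irrefl ext)
qed

end

sublocale htr \<subseteq> h: gen Qh T
  by unfold_locales (rule Qh_gen)

context htr begin

lemma hM:
  assumes s: "s \<in> {0..T}" and t: "t \<in> {s..T}"
  shows "h.M s x t y = pre.M s x t y * phi t y / phi s x"
proof -
  have u: "fwd_sol Qpre T s (\<lambda>t y. (1 / phi s x) * pre.M s x t y)"
    by (rule pre.fwd_scale[OF pre.M_sol(1)[OF s]])
  have f: "fwd_sol Qh T s (\<lambda>t y. (1 / phi s x) * pre.M s x t y * phi t y)"
    by (rule H1[OF s u])
  have i: "(\<lambda>y. (1 / phi s x) * pre.M s x s y * phi s y) = dirac x"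
    using pre.M_sol(2)[OF s] less_imp_neq[OF phi_pos[OF s, of x]] by (intro ext) (auto simp: dirac_def)
  show ?thesis using h.M_eq[OF s f i t] by simp
qed

end

definition dterm :: "real \<Rightarrow> real \<Rightarrow> real" where "dterm a b = a - b + b * ln (b / a)"

lemma kl_dterm: "kl_rate Qpre Q t x = (\<Sum>y\<in>UNIV - {x}. dterm (Qpre t x y) (Q t x y))"
  unfolding kl_rate_def dterm_def ..

lemma dterm_id:
  assumes "a \<ge> 0" "b \<ge> 0" "a = 0 \<longrightarrow> b = 0" "u > 0" "v > 0"
  shows "b * (ln v - ln u) - a * (v - u) / u = dterm a b - dterm (a * v / u) b"
proof (cases "b = 0")
  case True
  then show ?thesis using assms by (simp add: dterm_def field_simps)
next
  case False
  then have b: "b > 0" and a: "a > 0" using assms by auto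
  have "ln (b / (a * v / u)) = ln b - ln a - ln v + ln u"
    using a b assms by (simp add: ln_div ln_mult)
  then have d1: "dterm (a * v / u) b = a * v / u - b + b * (ln b - ln a - ln v + ln u)"
    unfolding dterm_def by simp
  have "ln (b / a) = ln b - ln a" using a b by (simp add: ln_div)
  then have d2: "dterm a b = a - b + b * (ln b - ln a)" unfolding dterm_def by simp
  show ?thesis unfolding d1 d2 using assms by (simp add: field_simps)
qed

context htr begin

definition Dh where "Dh Q t x = (\<Sum>y\<in>UNIV - {x}. dterm (Qh t x y) (Q t x y))"

lemma verif:
  assumes gQ: "is_generator Q T" and ac: "abs_cont Qpre Q T" and s: "s \<in> {0..T}"
    and p: "fwd_sol Q T s p"
  shows "\<exists>g. continuous_on {s..T} g
     \<and> (\<forall>t\<in>{s..T}. g t = (\<Sum>x\<in>UNIV. p t x * (kl_rate Qpre Q t x - Dh Q t x)))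
     \<and> (g has_integral ((\<Sum>x\<in>UNIV. p T x * ln (phi T x)) - (\<Sum>x\<in>UNIV. p s x * ln (phi s x)))) {s..T}"
proof -
  interpret q: gen Q T by unfold_locales (rule gQ)
  define g where "g t = (\<Sum>x\<in>UNIV. (\<Sum>y\<in>UNIV - {x}. Q t y x * p t y - Q t x y * p t x) * ln (phi t x)
     + (1 / phi t x * (- (\<Sum>y\<in>UNIV - {x}. Qpre t x y * (phi t y - phi t x))))  * p t x)" for t
  have sT: "{s..T} \<subseteq> {0..T}" using s by auto
  have php: "t \<in> {s..T} \<Longrightarrow> phi t x > 0" for t x using phi_pos sT by auto
  have deriv: "((\<lambda>t. \<Sum>x\<in>UNIV. p t x * ln (phi t x)) has_real_derivative g t) (at t within {s..T})"
    if t: "t \<in> {s..T}" for t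
    unfolding g_def
  proof (rule DERIV_sum)
    fix x
    show "((\<lambda>t. p t x * ln (phi t x)) has_real_derivative
      (\<Sum>y\<in>UNIV - {x}. Q t y x * p t y - Q t x y * p t x) * ln (phi t x)
     + (1 / phi t x * (- (\<Sum>y\<in>UNIV - {x}. Qpre t x y * (phi t y - phi t x))))  * p t x) (at t within {s..T})"
      by (rule DERIV_mult[OF q.fwd_deriv[OF p t]
            DERIV_ln_divide[THEN DERIV_chain2, OF php[OF t] phi_deriv_sub[OF s t]]])
  qed
  have cont: "continuous_on {s..T} g"
    unfolding g_def
    by (intro continuous_intros continuous_on_subset[OF q.Qcont sT] continuous_on_subset[OF pre.Qcont sT]
        continuous_on_subset[OF phi_cont sT] q.fwd_cont[OF p])
       (use php in \<open>auto simp: less_imp_neq[THEN not_sym]\<close>)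
  have int: "(g has_integral ((\<Sum>x\<in>UNIV. p T x * ln (phi T x)) - (\<Sum>x\<in>UNIV. p s x * ln (phi s x)))) {s..T}"
    using s deriv
    by (intro fundamental_theorem_of_calculus)
       (auto simp: has_real_derivative_iff_has_vector_derivative[symmetric])
  have eq: "g t = (\<Sum>x\<in>UNIV. p t x * (kl_rate Qpre Q t x - Dh Q t x))" if t: "t \<in> {s..T}" for t
  proof -
    have t0: "t \<in> {0..T}" using t sT by auto
    let ?L = "\<lambda>x. ln (phi t x)"
    have A: "(\<Sum>x\<in>UNIV. (\<Sum>y\<in>UNIV - {x}. Q t y x * p t y - Q t x y * p t x) * ?L x)
       = (\<Sum>x\<in>UNIV. p t x * (\<Sum>y\<in>UNIV - {x}. Q t x y * (?L y - ?L x)))"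
    proof -
      have "(\<Sum>x\<in>UNIV. (\<Sum>y\<in>UNIV - {x}. Q t y x * p t y - Q t x y * p t x) * ?L x)
        = (\<Sum>x\<in>UNIV. \<Sum>y\<in>UNIV - {x}. Q t y x * p t y * ?L x) - (\<Sum>x\<in>UNIV. \<Sum>y\<in>UNIV - {x}. Q t x y * p t x * ?L x)"
        by (simp add: sum_distrib_right left_diff_distrib sum_subtractf)
      also have "(\<Sum>x\<in>UNIV. \<Sum>y\<in>UNIV - {x}. Q t y x * p t y * ?L x) = (\<Sum>x\<in>UNIV. \<Sum>y\<in>UNIV - {x}. Q t x y * p t x * ?L y)"
        by (rule offdiag_swap)
      also have "(\<Sum>x\<in>UNIV. \<Sum>y\<in>UNIV - {x}. Q t x y * p t x * ?L y) - (\<Sum>x\<in>UNIV. \<Sum>y\<in>UNIV - {x}. Q t x y * p t x * ?L x)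
         = (\<Sum>x\<in>UNIV. p t x * (\<Sum>y\<in>UNIV - {x}. Q t x y * (?L y - ?L x)))"
        by (simp add: sum_distrib_left right_diff_distrib sum_subtractf algebra_simps)
      finally show ?thesis .
    qed
    have B: "(\<Sum>x\<in>UNIV. (1 / phi t x * (- (\<Sum>y\<in>UNIV - {x}. Qpre t x y * (phi t y - phi t x))))  * p t x)
       = (\<Sum>x\<in>UNIV. p t x * (\<Sum>y\<in>UNIV - {x}. - (Qpre t x y * (phi t y - phi t x) / phi t x)))"
      by (rule sum.cong[OF refl]) (simp add: sum_divide_distrib sum_negf)
    have "g t = (\<Sum>x\<in>UNIV. p t x * (\<Sum>y\<in>UNIV - {x}. Q t x y * (?L y - ?L x)))
       + (\<Sum>x\<in>UNIV. p t x * (\<Sum>y\<in>UNIV - {x}. - (Qpre t x y * (phi t y - phi t x) / phi t x)))"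
      unfolding g_def sum.distrib A B ..
    also have "\<dots> = (\<Sum>x\<in>UNIV. p t x * (\<Sum>y\<in>UNIV - {x}. Q t x y * (?L y - ?L x) - Qpre t x y * (phi t y - phi t x) / phi t x))"
      by (simp add: sum.distrib[symmetric] distrib_left[symmetric] sum_subtractf)
    also have "\<dots> = (\<Sum>x\<in>UNIV. p t x * (kl_rate Qpre Q t x - Dh Q t x))"
    proof (rule sum.cong[OF refl])
      fix x
      have "(\<Sum>y\<in>UNIV - {x}. Q t x y * (?L y - ?L x) - Qpre t x y * (phi t y - phi t x) / phi t x)
          = (\<Sum>y\<in>UNIV - {x}. dterm (Qpre t x y) (Q t x y) - dterm (Qh t x y) (Q t x y))"
      proof (rule sum.cong[OF refl])
        fix y assume "y \<in> UNIV - {x}"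
        then have xy: "x \<noteq> y" by auto
        show "Q t x y * (?L y - ?L x) - Qpre t x y * (phi t y - phi t x) / phi t x
            = dterm (Qpre t x y) (Q t x y) - dterm (Qh t x y) (Q t x y)"
          unfolding Qh_def using xy
          by (simp add: dterm_id pre.Qnn[OF t0 xy] q.Qnn[OF t0 xy] phi_pos[OF t0]
              ac[unfolded abs_cont_def, rule_format, OF t0 xy])
      qed
      then show "p t x * (\<Sum>y\<in>UNIV - {x}. Q t x y * (?L y - ?L x) - Qpre t x y * (phi t y - phi t x) / phi t x)
          = p t x * (kl_rate Qpre Q t x - Dh Q t x)"
        unfolding kl_dterm Dh_def by (simp add: sum_subtractf)
    qed
    finally show ?thesis .
  qed
  show ?thesis using cont eq int by blast
qed

end

lemma dterm_same: "dterm a a = 0"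
  by (cases "a = 0") (simp_all add: dterm_def)

lemma dterm_hell:
  assumes "a \<ge> 0" "b \<ge> 0" "a = 0 \<longrightarrow> b = 0"
  shows "(sqrt a - sqrt b)\<^sup>2 \<le> dterm a b"
proof (cases "b = 0")
  case True then show ?thesis using assms by (simp add: dterm_def)
next
  case False
  then have b: "b > 0" and a: "a > 0" using assms by auto
  define sa where "sa = sqrt a"
  define sb where "sb = sqrt b"
  have sa: "sa > 0" "sa\<^sup>2 = a" using a by (auto simp: sa_def)
  have sb: "sb > 0" "sb\<^sup>2 = b" using b by (auto simp: sb_def)
  have "ln (sa / sb) \<le> sa / sb - 1" using sa sb by (intro ln_le_minus_one) simp
  then have l: "ln sb - ln sa \<ge> 1 - sa / sb" using sa sb by (simp add: ln_div)
  have lb: "ln (b / a) = 2 * (ln sb - ln sa)"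
    using sa sb by (simp add: ln_div power2_eq_square ln_mult flip: sa(2) sb(2))
  have "b * ln (b / a) \<ge> 2 * b - 2 * sa * sb"
  proof -
    have "b * (1 - sa / sb) = sb * sb - sa * sb" using sb by (simp add: power2_eq_square field_simps flip: sb(2))
    moreover have "b * (1 - sa / sb) \<le> b * (ln sb - ln sa)" using l b by (intro mult_left_mono) auto
    ultimately show ?thesis unfolding lb using sb(2) by (simp add: power2_eq_square algebra_simps)
  qed
  then show ?thesis
    unfolding dterm_def sa_def[symmetric] sb_def[symmetric]
    using sa(2) sb(2) by (simp add: power2_diff algebra_simps)
qed

context htr begin

lemma klh:
  assumes t: "t \<in> {0..T}"
  shows "kl_rate Qpre Qh t x = (\<Sum>y\<in>UNIV - {x}. Qpre t x y - Qh t x y + Qh t x y * ln (phi t y / phi t x))"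
  unfolding kl_rate_def
proof (rule sum.cong[OF refl])
  fix y assume "y \<in> UNIV - {x}"
  then have xy: "x \<noteq> y" by auto
  have px: "phi t x > 0" and py: "phi t y > 0" using phi_pos[OF t] by auto
  show "Qpre t x y - Qh t x y + Qh t x y * ln (Qh t x y / Qpre t x y)
      = Qpre t x y - Qh t x y + Qh t x y * ln (phi t y / phi t x)"
  proof (cases "Qpre t x y = 0")
    case True then show ?thesis by (simp add: Qh_def xy)
  next
    case False
    then have "Qh t x y / Qpre t x y = phi t y / phi t x" using xy px by (simp add: Qh_def)
    then show ?thesis by simp
  qed
qed

lemma klh_cont: "continuous_on {0..T} (\<lambda>t. kl_rate Qpre Qh t x)"
proof -
  have "continuous_on {0..T} (\<lambda>t. \<Sum>y\<in>UNIV - {x}. Qpre t x y - Qh t x y + Qh t x y * ln (phi t y / phi t x))"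
    by (intro continuous_intros pre.Qcont h.Qcont phi_cont)
       (auto simp: phi_pos less_imp_neq[THEN not_sym])
  then show ?thesis by (rule continuous_on_cong[THEN iffD1, rotated 2]) (auto simp: klh)
qed

lemma Dh_h: "Dh Qh t x = 0"
  unfolding Dh_def by (simp add: dterm_same)

lemma abs_cont_h: "abs_cont Qpre Qh T"
  unfolding abs_cont_def by (auto simp: Qh_def)

lemma hval:
  assumes s: "s \<in> {0..T}"
  shows "set_integrable lborel {s..T} (\<lambda>t. \<Sum>y\<in>UNIV. h.M s x t y * kl_rate Qpre Qh t y)"
    and "(LINT t:{s..T}|lborel. (\<Sum>y\<in>UNIV. h.M s x t y * kl_rate Qpre Qh t y))
          = (\<Sum>y\<in>UNIV. h.M s x T y * (r y / \<alpha>)) - ln (phi s x)"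
proof -
  let ?F = "\<lambda>t. \<Sum>y\<in>UNIV. h.M s x t y * kl_rate Qpre Qh t y"
  have sT: "{s..T} \<subseteq> {0..T}" using s by auto
  have cF: "continuous_on {s..T} ?F"
    by (intro continuous_intros h.fwd_cont[OF h.M_sol(1)[OF s]] continuous_on_subset[OF klh_cont sT])
  show si: "set_integrable lborel {s..T} ?F" by (rule borel_integrable_atLeastAtMost'[OF cF])
  obtain g where g: "continuous_on {s..T} g"
     "\<forall>t\<in>{s..T}. g t = (\<Sum>y\<in>UNIV. h.M s x t y * (kl_rate Qpre Qh t y - Dh Qh t y))"
     "(g has_integral ((\<Sum>y\<in>UNIV. h.M s x T y * ln (phi T y)) - (\<Sum>y\<in>UNIV. h.M s x s y * ln (phi s y)))) {s..T}"
    using verif[OF Qh_gen abs_cont_h s h.M_sol(1)[OF s]] by blast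
  have "(LINT t:{s..T}|lborel. ?F t) = integral {s..T} ?F"
    by (rule set_borel_integral_eq_integral(2)[OF si])
  also have "\<dots> = integral {s..T} g"
    by (rule integral_cong) (use g(2) in \<open>simp add: Dh_h\<close>)
  also have "\<dots> = (\<Sum>y\<in>UNIV. h.M s x T y * ln (phi T y)) - (\<Sum>y\<in>UNIV. h.M s x s y * ln (phi s y))"
    using g(3) by (rule integral_unique)
  also have "\<dots> = (\<Sum>y\<in>UNIV. h.M s x T y * (r y / \<alpha>)) - ln (phi s x)"
    using h.M_sol(2)[OF s] by (simp add: phi_T sum_dirac2)
  finally show "(LINT t:{s..T}|lborel. ?F t) = (\<Sum>y\<in>UNIV. h.M s x T y * (r y / \<alpha>)) - ln (phi s x)" .
qed

lemma marg_M: "is_generator Q T \<Longrightarrow> marginal Q T x0 t y = gen.M Q T 0 x0 t y"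
  by (simp add: marginal_def gen.M_def[OF gen.intro])

lemma h_adm: "admissible Qpre T x0 Qh"
  unfolding admissible_def marg_M[OF Qh_gen] using Qh_gen abs_cont_h hval(1)[of 0 x0] Tpos by auto

lemma J_h: "objective r \<alpha> Qpre T x0 Qh = \<alpha> * ln (phi 0 x0)"
proof -
  have "objective r \<alpha> Qpre T x0 Qh = (\<Sum>y\<in>UNIV. h.M 0 x0 T y * r y)
     - \<alpha> * ((\<Sum>y\<in>UNIV. h.M 0 x0 T y * (r y / \<alpha>)) - ln (phi 0 x0))"
    unfolding objective_def marg_M[OF Qh_gen] using hval(2)[of 0 x0] Tpos by simp
  also have "\<dots> = \<alpha> * ln (phi 0 x0)"
    using apos by (simp add: right_diff_distrib sum_distrib_left)
  finally show ?thesis .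
qed


lemma main:
  assumes adm: "admissible Qpre T x0 Qstar"
    and opt: "\<forall>Q. admissible Qpre T x0 Q \<longrightarrow> objective r \<alpha> Qpre T x0 Q \<le> objective r \<alpha> Qpre T x0 Qstar"
  shows "(\<forall>t\<in>{0..T}. \<exists>c>0. \<forall>x.
           marginal Qstar T x0 t x = c * exp (value_fn r \<alpha> Qpre Qstar T t x / \<alpha>) * marginal Qpre T x0 t x)
       \<and> (\<exists>c>0. \<forall>x. marginal Qstar T x0 T x = c * exp (r x / \<alpha>) * marginal Qpre T x0 T x)"
proof -
  have gS: "is_generator Qstar T" and acS: "abs_cont Qpre Qstar T"
    and intS: "set_integrable lborel {0..T} (\<lambda>t. \<Sum>x\<in>UNIV. marginal Qstar T x0 t x * kl_rate Qpre Qstar t x)"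
    using adm unfolding admissible_def by auto
  interpret st: gen Qstar T by unfold_locales (rule gS)
  have T0: "(0::real) \<in> {0..T}" using Tpos by auto
  define ps where "ps t x = st.M 0 x0 t x" for t x
  have ps_sol: "fwd_sol Qstar T 0 ps" unfolding ps_def using st.M_sol(1)[OF T0] .
  have ps0: "ps 0 = dirac x0" unfolding ps_def using st.M_sol(2)[OF T0] .
  have ps_nn: "t \<in> {0..T} \<Longrightarrow> ps t x \<ge> 0" for t x unfolding ps_def using st.M_nonneg[OF T0] by auto
  have margS: "marginal Qstar T x0 t x = ps t x" for t x unfolding ps_def marg_M[OF gS] ..
  have margP: "marginal Qpre T x0 t x = pre.M 0 x0 t x" for t x unfolding marg_M[OF pre.G] ..
  obtain g where g: "continuous_on {0..T} g"
     "\<forall>t\<in>{0..T}. g t = (\<Sum>x\<in>UNIV. ps t x * (kl_rate Qpre Qstar t x - Dh Qstar t x))"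
     "(g has_integral ((\<Sum>x\<in>UNIV. ps T x * ln (phi T x)) - (\<Sum>x\<in>UNIV. ps 0 x * ln (phi 0 x)))) {0..T}"
    using verif[OF gS acS T0 ps_sol] by blast
  define K where "K t = (\<Sum>x\<in>UNIV. ps t x * kl_rate Qpre Qstar t x)" for t
  have intK: "set_integrable lborel {0..T} K" using intS unfolding K_def margS .
  have intg: "set_integrable lborel {0..T} g" by (rule borel_integrable_atLeastAtMost'[OF g(1)])
  have Lg: "(LINT t:{0..T}|lborel. g t) = (\<Sum>x\<in>UNIV. ps T x * (r x / \<alpha>)) - ln (phi 0 x0)"
  proof -
    have "(LINT t:{0..T}|lborel. g t) = integral {0..T} g" by (rule set_borel_integral_eq_integral(2)[OF intg])
    also have "\<dots> = (\<Sum>x\<in>UNIV. ps T x * ln (phi T x)) - (\<Sum>x\<in>UNIV. ps 0 x * ln (phi 0 x))"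
      using g(3) by (rule integral_unique)
    also have "\<dots> = (\<Sum>x\<in>UNIV. ps T x * (r x / \<alpha>)) - ln (phi 0 x0)"
      unfolding ps0 by (simp add: phi_T sum_dirac2)
    finally show ?thesis .
  qed
  have JS: "objective r \<alpha> Qpre T x0 Qstar = (\<Sum>x\<in>UNIV. ps T x * r x) - \<alpha> * (LINT t:{0..T}|lborel. K t)"
    unfolding objective_def margS K_def ..
  have "\<alpha> * ln (phi 0 x0) \<le> (\<Sum>x\<in>UNIV. ps T x * r x) - \<alpha> * (LINT t:{0..T}|lborel. K t)"
    using opt[rule_format, OF h_adm[of x0]] J_h[of x0] JS by simp
  moreover have "(\<Sum>x\<in>UNIV. ps T x * r x) = \<alpha> * (\<Sum>x\<in>UNIV. ps T x * (r x / \<alpha>))"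
    using apos by (simp add: sum_distrib_left)
  ultimately have "\<alpha> * (LINT t:{0..T}|lborel. K t) \<le> \<alpha> * (LINT t:{0..T}|lborel. g t)"
    unfolding Lg by (simp add: right_diff_distrib)
  then have KG: "(LINT t:{0..T}|lborel. K t) \<le> (LINT t:{0..T}|lborel. g t)" using apos by simp
  define G where "G t = K t - g t" for t
  have intG: "set_integrable lborel {0..T} G" unfolding G_def using intK intg by (rule set_integral_diff(1))
  have LG: "(LINT t:{0..T}|lborel. G t) \<le> 0"
    unfolding G_def set_integral_diff(2)[OF intK intg] using KG by simp
  define H where "H t = (\<Sum>x\<in>UNIV. \<Sum>y\<in>UNIV - {x}. ps t x * (sqrt (Qh t x y) - sqrt (Qstar t x y))\<^sup>2)" for t
  have cH: "continuous_on {0..T} H" unfolding H_def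
    by (intro continuous_intros st.fwd_cont[OF ps_sol] h.Qcont st.Qcont)
  have intH: "set_integrable lborel {0..T} H" by (rule borel_integrable_atLeastAtMost'[OF cH])
  have Hnn: "t \<in> {0..T} \<Longrightarrow> H t \<ge> 0" for t unfolding H_def using ps_nn by (auto intro!: sum_nonneg)
  have HG: "H t \<le> G t" if t: "t \<in> {0..T}" for t
  proof -
    have "G t = (\<Sum>x\<in>UNIV. ps t x * Dh Qstar t x)"
      using g(2) t unfolding G_def K_def by (simp add: right_diff_distrib sum_subtractf)
    also have "\<dots> \<ge> H t" unfolding H_def Dh_def sum_distrib_left
    proof (intro sum_mono)
      fix x y :: 'x assume "y \<in> UNIV - {x}"
      then have xy: "x \<noteq> y" by auto
      have hnn: "Qh t x y \<ge> 0" using h.Qnn[OF t xy] .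
      have snn: "Qstar t x y \<ge> 0" using st.Qnn[OF t xy] .
      have z: "Qh t x y = 0 \<longrightarrow> Qstar t x y = 0"
        using acS t xy less_imp_neq[OF phi_pos[OF t, of x]] less_imp_neq[OF phi_pos[OF t, of y]]
        unfolding abs_cont_def Qh_def by auto
      show "ps t x * (sqrt (Qh t x y) - sqrt (Qstar t x y))\<^sup>2 \<le> ps t x * dterm (Qh t x y) (Qstar t x y)"
        by (rule mult_left_mono[OF dterm_hell[OF hnn snn z] ps_nn[OF t]])
    qed
    finally show ?thesis .
  qed
  have "(LINT t:{0..T}|lborel. H t) \<le> (LINT t:{0..T}|lborel. G t)"
    by (rule set_integral_mono[OF intH intG HG])
  then have LH: "integral {0..T} H \<le> 0" using LG set_borel_integral_eq_integral(2)[OF intH] by simp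
  have "integral {0..T} H \<ge> 0"
    by (rule integral_nonneg[OF set_borel_integral_eq_integral(1)[OF intH]]) (use Hnn in auto)
  then have "integral {0..T} H = 0" using LH by simp
  then have H0int: "(H has_integral 0) (cbox 0 T)"
    using set_borel_integral_eq_integral(1)[OF intH] by (metis box_real(2) has_integral_integral)
  have H0: "H t = 0" if t: "t \<in> {0..T}" for t
    by (rule has_integral_0_cbox_imp_0[OF _ _ H0int]) (use cH Hnn t Tpos in auto)
  have rate_eq: "Qstar t x y = Qh t x y" if t: "t \<in> {0..T}" and xy: "x \<noteq> y" and pos: "ps t x > 0" for t and x y :: 'x
  proof -
    have nn: "\<forall>x\<in>UNIV. 0 \<le> (\<Sum>y\<in>UNIV - {x}. ps t x * (sqrt (Qh t x y) - sqrt (Qstar t x y))\<^sup>2)"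
      using ps_nn[OF t] by (auto intro!: sum_nonneg)
    have S0: "(\<Sum>y\<in>UNIV - {x}. ps t x * (sqrt (Qh t x y) - sqrt (Qstar t x y))\<^sup>2) = 0"
      using H0[OF t] nn unfolding H_def by (simp add: sum_nonneg_eq_0_iff)
    have S1: "\<forall>y\<in>UNIV - {x}. 0 \<le> ps t x * (sqrt (Qh t x y) - sqrt (Qstar t x y))\<^sup>2"
      using ps_nn[OF t] by auto
    have "\<forall>y\<in>UNIV - {x}. ps t x * (sqrt (Qh t x y) - sqrt (Qstar t x y))\<^sup>2 = 0"
    proof -
      have fin: "finite (UNIV - {x})" by simp
      show ?thesis
        using sum_nonneg_eq_0_iff[OF fin, where f="\<lambda>y. ps t x * (sqrt (Qh t x y) - sqrt (Qstar t x y))\<^sup>2"]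
          S0 S1 by (metis (no_types, lifting))
    qed
    then have "ps t x * (sqrt (Qh t x y) - sqrt (Qstar t x y))\<^sup>2 = 0"
      using xy by blast
    then have "sqrt (Qh t x y) = sqrt (Qstar t x y)" using pos by simp
    then show ?thesis by simp
  qed
  have prod: "Qstar t x y * ps t x = Qh t x y * ps t x" if t: "t \<in> {0..T}" and xy: "x \<noteq> y" for t and x y :: 'x
  proof (cases "ps t x = 0")
    case True then show ?thesis by simp
  next
    case False then have "ps t x > 0" using ps_nn[OF t] by (simp add: order_le_neq_trans)
    then show ?thesis using rate_eq[OF t xy] by simp
  qed
  have ps_h: "fwd_sol Qh T 0 ps" by (rule fwd_transfer[OF ps_sol prod]) auto
  have ps_eq: "ps t y = pre.M 0 x0 t y * phi t y / phi 0 x0" if t: "t \<in> {0..T}" for t y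
    using h.M_eq[OF T0 ps_h ps0 t, of y] hM[OF T0 t] by simp
  have valeq: "value_fn r \<alpha> Qpre Qstar T t y = \<alpha> * ln (phi t y)" if t: "t \<in> {0..T}" and pos: "ps t y > 0" for t y
  proof -
    define q where "q s z = st.M t y s z" for s z
    have q_sol: "fwd_sol Qstar T t q" unfolding q_def using st.M_sol(1)[OF t] .
    have q0: "q t = dirac y" unfolding q_def using st.M_sol(2)[OF t] .
    have q_nn: "s \<in> {t..T} \<Longrightarrow> q s z \<ge> 0" for s z unfolding q_def using st.M_nonneg[OF t] by auto
    have ps_ge: "ps s z \<ge> ps t y * q s z" if s: "s \<in> {t..T}" for s z
    proof -
      have "ps s z = (\<Sum>w\<in>UNIV. ps t w * st.M t w s z)"
        by (rule st.superpos[OF t st.fwd_restrict[OF ps_sol] s]) (use t in auto)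
      also have "\<dots> \<ge> ps t y * st.M t y s z"
        by (rule member_le_sum[where f="\<lambda>w. ps t w * st.M t w s z"])
           (use ps_nn[OF t] st.M_nonneg[OF t s] in auto)
      finally show ?thesis unfolding q_def .
    qed
    have qrate: "Qstar s z w = Qh s z w" if s: "s \<in> {t..T}" and zw: "z \<noteq> w" and qp: "q s z > 0" for s and z w :: 'x
    proof -
      have s0: "s \<in> {0..T}" using s t by auto
      have "ps s z > 0" using ps_ge[OF s, of z] pos qp by (meson mult_pos_pos order_less_le_trans)
      then show ?thesis using rate_eq[OF s0 zw] by simp
    qed
    have qprod: "Qstar s z w * q s z = Qh s z w * q s z" if s: "s \<in> {t..T}" and zw: "z \<noteq> w" for s and z w :: 'x
    proof (cases "q s z = 0")
      case True then show ?thesis by simp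
    next
      case False then have "q s z > 0" using q_nn[OF s] by (simp add: order_le_neq_trans)
      then show ?thesis using qrate[OF s zw] by simp
    qed
    have q_h: "fwd_sol Qh T t q" by (rule fwd_transfer[OF q_sol qprod])
    have qM: "q s z = h.M t y s z" if s: "s \<in> {t..T}" for s z
      using h.M_eq[OF t q_h q0 s] by simp
    have integ: "(\<Sum>z\<in>UNIV. q s z * kl_rate Qpre Qstar s z) = (\<Sum>z\<in>UNIV. h.M t y s z * kl_rate Qpre Qh s z)"
      if s: "s \<in> {t..T}" for s
    proof (rule sum.cong[OF refl])
      fix z
      show "q s z * kl_rate Qpre Qstar s z = h.M t y s z * kl_rate Qpre Qh s z"
      proof (cases "q s z = 0")
        case True then show ?thesis using qM[OF s] by simp
      next
        case False then have qp: "q s z > 0" using q_nn[OF s] by (simp add: order_le_neq_trans)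
        have "kl_rate Qpre Qstar s z = kl_rate Qpre Qh s z"
          unfolding kl_rate_def by (rule sum.cong[OF refl]) (use qrate[OF s _ qp] in auto)
        then show ?thesis using qM[OF s] by simp
      qed
    qed
    have "value_fn r \<alpha> Qpre Qstar T t y
       = (\<Sum>z\<in>UNIV. q T z * r z) - \<alpha> * (LINT s:{t..T}|lborel. (\<Sum>z\<in>UNIV. q s z * kl_rate Qpre Qstar s z))"
      unfolding value_fn_def q_def st.M_def ..
    also have "(LINT s:{t..T}|lborel. (\<Sum>z\<in>UNIV. q s z * kl_rate Qpre Qstar s z))
       = (LINT s:{t..T}|lborel. (\<Sum>z\<in>UNIV. h.M t y s z * kl_rate Qpre Qh s z))"
      by (rule set_lebesgue_integral_cong) (use integ in auto)
    also have "\<dots> = (\<Sum>z\<in>UNIV. h.M t y T z * (r z / \<alpha>)) - ln (phi t y)" by (rule hval(2)[OF t])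
    also have "(\<Sum>z\<in>UNIV. q T z * r z) = \<alpha> * (\<Sum>z\<in>UNIV. h.M t y T z * (r z / \<alpha>))"
      using qM[of T] t apos by (simp add: sum_distrib_left)
    finally show ?thesis by (simp add: right_diff_distrib)
  qed
  have c: "1 / phi 0 x0 > 0" using phi_pos[OF T0] by simp
  have part1: "\<forall>t\<in>{0..T}. \<exists>c>0. \<forall>x.
           marginal Qstar T x0 t x = c * exp (value_fn r \<alpha> Qpre Qstar T t x / \<alpha>) * marginal Qpre T x0 t x"
  proof (intro ballI exI[of _ "1 / phi 0 x0"] conjI allI c)
    fix t x assume t: "t \<in> {0..T}"
    show "marginal Qstar T x0 t x = 1 / phi 0 x0 * exp (value_fn r \<alpha> Qpre Qstar T t x / \<alpha>) * marginal Qpre T x0 t x"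
    proof (cases "ps t x = 0")
      case True
      then have "pre.M 0 x0 t x = 0" using ps_eq[OF t, of x] phi_pos[OF t, of x] phi_pos[OF T0, of x0] by simp
      then show ?thesis unfolding margS margP using True by simp
    next
      case False then have "ps t x > 0" using ps_nn[OF t] by (simp add: order_le_neq_trans)
      then have "exp (value_fn r \<alpha> Qpre Qstar T t x / \<alpha>) = phi t x"
        using valeq[OF t] apos phi_pos[OF t, of x] by simp
      then show ?thesis unfolding margS margP ps_eq[OF t] by simp
    qed
  qed
  have TT: "T \<in> {0..T}" using Tpos by auto
  have part2: "\<exists>c>0. \<forall>x. marginal Qstar T x0 T x = c * exp (r x / \<alpha>) * marginal Qpre T x0 T x"
    by (intro exI[of _ "1 / phi 0 x0"] conjI allI c) (simp add: margS margP ps_eq[OF TT] phi_T)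
  show ?thesis using part1 part2 by blast
qed

end

theorem theorem4:
  fixes T \<alpha> :: real
    and r :: "'x::finite \<Rightarrow> real"
    and x0 :: 'x
    and Qpre Qstar :: "real \<Rightarrow> 'x \<Rightarrow> 'x \<Rightarrow> real"
  assumes "T > 0" and "\<alpha> > 0"
    and "is_generator Qpre T"
    and "admissible Qpre T x0 Qstar"
    and "\<forall>Q. admissible Qpre T x0 Q \<longrightarrow> objective r \<alpha> Qpre T x0 Q \<le> objective r \<alpha> Qpre T x0 Qstar"
  shows "(\<forall>t\<in>{0..T}. \<exists>c>0. \<forall>x.
           marginal Qstar T x0 t x = c * exp (value_fn r \<alpha> Qpre Qstar T t x / \<alpha>) * marginal Qpre T x0 t x)
       \<and> (\<exists>c>0. \<forall>x. marginal Qstar T x0 T x = c * exp (r x / \<alpha>) * marginal Qpre T x0 T x)"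
proof -
  interpret htr Qpre T \<alpha> r
    by (intro htr.intro gen.intro htr_axioms.intro) (use assms in auto)
  show ?thesis by (rule main[OF assms(4) assms(5)])
qed

end
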